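(* Let $S$ be a set of $n\ge 3$ points in the plane in general position (no four points of $S$ cocircular, no three collinear). For $1\le i\le n-1$ let $f_i^{\infty}$ be the number of unbounded regions of the $i$-th order Voronoi diagram of $S$, and for $0\le j\le n-3$ let $c_j$ be the number of 3-element subsets of $S$ whose circumscribed circle contains exactly $j$ points of $S$ in its interior; set $c_{-1}:=0$. Then for every $i$ with $1\le i\le n-2$, $$f_i^{\infty} + (c_{i-1}-c_{i-2}) = 2(n-i).$$
   Context: For points $x,y$ in the plane let $h(x,y)=\{p\in\mathbb{R}^2 : d(x,p)\le d(y,p)\}$. For $A\subseteq S$ let $V(A)=\bigcap_{x\in A,\,y\in S\setminus A} h(x,y)$. The $i$-th order Voronoi diagram consists of the nonempty regions $V(A)$ with $|A|=i$; $f_i^\infty$ counts those that are unbounded subsets of the plane. *)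

theory Defs
  imports "HOL-Analysis.Analysis"
begin

type_synonym point = "real ^ 2"

definition halfplane :: "point \<Rightarrow> point \<Rightarrow> point set" where
  "halfplane x y = {p. dist x p \<le> dist y p}"

definition voronoi_region :: "point set \<Rightarrow> point set \<Rightarrow> point set" where
  "voronoi_region S A = (\<Inter>x\<in>A. \<Inter>y\<in>S - A. halfplane x y)"

definition f_inf :: "point set \<Rightarrow> nat \<Rightarrow> nat" where
  "f_inf S i = card {A. A \<subseteq> S \<and> card A = i \<and> voronoi_region S A \<noteq> {}
                       \<and> \<not> bounded (voronoi_region S A)}"

definition cocircular :: "point set \<Rightarrow> bool" where
  "cocircular P \<longleftrightarrow> (\<exists>c r. \<forall>p\<in>P. dist p c = r)"

definition general_position :: "point set \<Rightarrow> bool" where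
  "general_position S \<longleftrightarrow>
     (\<forall>T\<subseteq>S. card T = 3 \<longrightarrow> \<not> collinear T) \<and>
     (\<forall>T\<subseteq>S. card T = 4 \<longrightarrow> \<not> cocircular T)"

definition in_circumdisk :: "point set \<Rightarrow> point \<Rightarrow> bool" where
  "in_circumdisk T p \<longleftrightarrow> (\<exists>c r. (\<forall>q\<in>T. dist q c = r) \<and> dist p c < r)"

definition circ_count :: "point set \<Rightarrow> int \<Rightarrow> nat" where
  "circ_count S j = (if j < 0 then 0 else
     card {T. T \<subseteq> S \<and> card T = 3 \<and> int (card {p\<in>S. in_circumdisk T p}) = j})"

end

theory Submission
  imports Defs "HOL-Analysis.Analysis"
begin

lemma inner2: "inner (x::point) y = x$1*y$1 + x$2*y$2"
  by (simp add: inner_vec_def sum_2)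

definition sd :: "point \<Rightarrow> point \<Rightarrow> real" where
  "sd x y = (x$1 - y$1)^2 + (x$2 - y$2)^2"

definition det3 :: "point \<Rightarrow> point \<Rightarrow> point \<Rightarrow> real" where
  "det3 a b c = (b$1 - a$1)*(c$2 - a$2) - (b$2 - a$2)*(c$1 - a$1)"

lemma sqd: "(dist (x::point) y)^2 = sd x y"
  unfolding dist_norm power2_norm_eq_inner inner2 sd_def by (simp add: power2_eq_square)

lemma sd_nonneg: "sd x y \<ge> 0" by (simp add: sd_def)

lemma dist_sd: "dist x y = sqrt (sd x y)"
  by (metis sqd real_sqrt_abs abs_of_nonneg zero_le_dist)

lemma dist_le_sd: "dist x y \<le> dist z w \<longleftrightarrow> sd x y \<le> sd z w"
  by (simp add: dist_sd sd_nonneg)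
lemma dist_less_sd: "dist x y < dist z w \<longleftrightarrow> sd x y < sd z w"
  by (simp add: dist_sd sd_nonneg)
lemma dist_eq_sd: "dist x y = dist z w \<longleftrightarrow> sd x y = sd z w"
  by (simp add: dist_sd sd_nonneg)

lemma sd_zero: "sd x y = 0 \<longleftrightarrow> x = y"
  by (metis dist_eq_0_iff dist_sd real_sqrt_eq_zero_cancel_iff real_sqrt_zero)

lemma point_eqI: "(x::point)$1 = y$1 \<Longrightarrow> x$2 = y$2 \<Longrightarrow> x = y"
  by (simp add: vec_eq_iff forall_2)

lemma gp_noncol:
  assumes "general_position S" "a\<in>S" "b\<in>S" "c\<in>S" "a\<noteq>b" "a\<noteq>c" "b\<noteq>c"
  shows "det3 a b c \<noteq> 0"
proof
  assume d: "det3 a b c = 0"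
  have par: "\<exists>k. y1 = k*x1 \<and> y2 = k*x2" if "x1*y2 - x2*y1 = 0" "x1 \<noteq> 0 \<or> x2 \<noteq> 0"
    for x1 x2 y1 y2 :: real
  proof (cases "x1 = 0")
    case True
    then have "x2 \<noteq> 0" using that by auto
    then show ?thesis using that True by (intro exI[of _ "y2/x2"]) (auto simp: field_simps)
  next
    case False
    then show ?thesis using that by (intro exI[of _ "y1/x1"]) (auto simp: field_simps)
  qed
  have "a$1 - b$1 \<noteq> 0 \<or> a$2 - b$2 \<noteq> 0" using assms(5) point_eqI by force
  moreover have "(a$1 - b$1)*(c$2 - b$2) - (a$2 - b$2)*(c$1 - b$1) = 0"
    using d unfolding det3_def by (simp add: algebra_simps)
  ultimately obtain k where "c$1 - b$1 = k*(a$1 - b$1)" "c$2 - b$2 = k*(a$2 - b$2)"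
    using par by blast
  then have "c - b = k *\<^sub>R (a - b)" by (intro point_eqI) auto
  then have "\<exists>k. c - b = k *\<^sub>R (a - b)" by blast
  then have "collinear {a,b,c}"
    by (subst collinear_3) (auto simp: collinear_lemma)
  moreover have "card {a,b,c} = 3" using assms by auto
  ultimately show False using assms(1-4) unfolding general_position_def by auto
qed

lemma gp_nococirc:
  assumes "general_position S" "a\<in>S" "b\<in>S" "c\<in>S" "d\<in>S"
    "a\<noteq>b" "a\<noteq>c" "a\<noteq>d" "b\<noteq>c" "b\<noteq>d" "c\<noteq>d"
    "sd b z0 = sd a z0" "sd c z0 = sd a z0" "sd d z0 = sd a z0"
  shows False
proof -
  have "cocircular {a,b,c,d}" unfolding cocircular_def
    using assms(12-14) by (intro exI[of _ z0] exI[of _ "dist a z0"]) (auto simp: dist_eq_sd)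
  moreover have "card {a,b,c,d} = 4" using assms by auto
  ultimately show False using assms(1-5) unfolding general_position_def by auto
qed

definition cc :: "point \<Rightarrow> point \<Rightarrow> point \<Rightarrow> point" where
  "cc a b c = (let A1 = b$1 - a$1; A2 = b$2 - a$2; B1 = c$1 - a$1; B2 = c$2 - a$2;
     D = A1*B2 - A2*B1; nA = A1^2 + A2^2; nB = B1^2+B2^2 in
     vector [a$1 + (nA*B2 - nB*A2)/(2*D), a$2 + (nB*A1 - nA*B1)/(2*D)])"

lemma cc_comp:
  assumes "det3 a b c \<noteq> 0"
  shows "(cc a b c)$1 = a$1 + (((b$1 - a$1)^2 + (b$2 - a$2)^2)*(c$2 - a$2) - ((c$1 - a$1)^2 + (c$2 - a$2)^2)*(b$2 - a$2))/(2*det3 a b c)"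
    "(cc a b c)$2 = a$2 + (((c$1 - a$1)^2 + (c$2 - a$2)^2)*(b$1 - a$1) - ((b$1 - a$1)^2 + (b$2 - a$2)^2)*(c$1 - a$1))/(2*det3 a b c)"
  by (simp_all add: cc_def det3_def Let_def)

lemma cc_eq:
  assumes "det3 a b c \<noteq> 0"
  shows "sd b (cc a b c) = sd a (cc a b c)" "sd c (cc a b c) = sd a (cc a b c)"
  using assms unfolding sd_def cc_comp[OF assms] 
  by (simp_all add: det3_def field_simps power2_eq_square, algebra+)

lemma cc_unique:
  assumes D: "det3 a b c \<noteq> 0" and e1: "sd b z = sd a z" and e2: "sd c z = sd a z"
  shows "z = cc a b c"
proof -
  define A1 where "A1 = b$1 - a$1"
  define A2 where "A2 = b$2 - a$2"
  define B1 where "B1 = c$1 - a$1"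
  define B2 where "B2 = c$2 - a$2"
  define z1 where "z1 = z$1 - a$1"
  define z2 where "z2 = z$2 - a$2"
  have f1: "2*(A1*z1 + A2*z2) = A1^2 + A2^2"
    using e1 unfolding sd_def A1_def A2_def z1_def z2_def by (simp add: power2_eq_square algebra_simps)
  have f2: "2*(B1*z1 + B2*z2) = B1^2 + B2^2"
    using e2 unfolding sd_def B1_def B2_def z1_def z2_def by (simp add: power2_eq_square algebra_simps)
  have Dd: "det3 a b c = A1*B2 - A2*B1" unfolding det3_def A1_def A2_def B1_def B2_def by simp
  have g1: "2*(A1*B2 - A2*B1)*z1 = B2*(2*(A1*z1 + A2*z2)) - A2*(2*(B1*z1 + B2*z2))"
    by (simp add: algebra_simps)
  have g2: "2*(A1*B2 - A2*B1)*z2 = A1*(2*(B1*z1 + B2*z2)) - B1*(2*(A1*z1 + A2*z2))"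
    by (simp add: algebra_simps)
  have DD: "A1*B2 - A2*B1 \<noteq> 0" using D Dd by simp
  have k1': "2*(A1*B2 - A2*B1)*z1 = B2*(A1^2+A2^2) - A2*(B1^2+B2^2)"
    by (simp only: g1 f1 f2)
  have k2': "2*(A1*B2 - A2*B1)*z2 = A1*(B1^2+B2^2) - B1*(A1^2+A2^2)"
    by (simp only: g2 f1 f2)
  have k1: "z1 * (2*(A1*B2 - A2*B1)) = (A1^2+A2^2)*B2 - (B1^2+B2^2)*A2"
    using k1' by (simp add: algebra_simps)
  have k2: "z2 * (2*(A1*B2 - A2*B1)) = (B1^2+B2^2)*A1 - (A1^2+A2^2)*B1"
    using k2' by (simp add: algebra_simps)
  have h1: "z1 = ((A1^2+A2^2)*B2 - (B1^2+B2^2)*A2)/(2*det3 a b c)"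
    using k1 DD unfolding Dd by (subst eq_divide_eq) simp
  have h2: "z2 = ((B1^2+B2^2)*A1 - (A1^2+A2^2)*B1)/(2*det3 a b c)"
    using k2 DD unfolding Dd by (subst eq_divide_eq) simp
  show ?thesis
    apply (rule point_eqI)
    using h1 h2 unfolding cc_comp[OF D] z1_def z2_def A1_def A2_def B1_def B2_def
    by simp_all
qed

lemma det3_swap12: "det3 b a c = - det3 a b c" by (simp add: det3_def algebra_simps)
lemma det3_swap23: "det3 a c b = - det3 a b c" by (simp add: det3_def algebra_simps)
lemma det3_rot: "det3 b c a = det3 a b c" by (simp add: det3_def algebra_simps)

lemma cc_swap12:
  assumes "det3 a b c \<noteq> 0" shows "cc b a c = cc a b c"
proof -
  have "det3 b a c \<noteq> 0" using assms det3_swap12[of a b c] by simp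
  have "cc a b c = cc b a c"
    by (rule cc_unique) (use \<open>det3 b a c \<noteq> 0\<close> cc_eq[OF assms] in auto)
  then show ?thesis by simp
qed

lemma cc_swap23:
  assumes "det3 a b c \<noteq> 0" shows "cc a c b = cc a b c"
proof -
  have "det3 a c b \<noteq> 0" using assms det3_swap23[of a b c] by simp
  have "cc a b c = cc a c b"
    by (rule cc_unique) (use \<open>det3 a c b \<noteq> 0\<close> cc_eq[OF assms] in auto)
  then show ?thesis by simp
qed

lemma circdisk_iff:
  assumes D: "det3 a b c \<noteq> 0"
  shows "in_circumdisk {a,b,c} z \<longleftrightarrow> sd z (cc a b c) < sd a (cc a b c)"
proof
  assume "in_circumdisk {a,b,c} z"
  then obtain c' r where h: "\<forall>q\<in>{a,b,c}. dist q c' = r" "dist z c' < r"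
    unfolding in_circumdisk_def by blast
  then have "sd b c' = sd a c'" "sd c c' = sd a c'" by (auto simp: dist_eq_sd[symmetric])
  then have "c' = cc a b c" using cc_unique[OF D] by blast
  then show "sd z (cc a b c) < sd a (cc a b c)" using h by (auto simp: dist_less_sd[symmetric])
next
  assume "sd z (cc a b c) < sd a (cc a b c)"
  then show "in_circumdisk {a,b,c} z" unfolding in_circumdisk_def using cc_eq[OF D]
    by (intro exI[of _ "cc a b c"] exI[of _ "dist a (cc a b c)"])
       (auto simp: dist_less_sd dist_eq_sd)
qed

definition Yc :: "real \<Rightarrow> point \<Rightarrow> real" where "Yc s z = z$1 + s * z$2"
definition Xc :: "real \<Rightarrow> point \<Rightarrow> real" where "Xc s z = z$2 - s * z$1"
definition beta :: "point \<Rightarrow> point \<Rightarrow> point \<Rightarrow> real" where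
  "beta p q z = (z$1 - p$1)*(z$1 - q$1) + (z$2 - p$2)*(z$2 - q$2)"
definition memb :: "point \<Rightarrow> point \<Rightarrow> real \<Rightarrow> point \<Rightarrow> bool" where
  "memb p q t z \<longleftrightarrow> beta p q z < 2*t*det3 p q z"
definition cen :: "point \<Rightarrow> point \<Rightarrow> real \<Rightarrow> point" where
  "cen p q t = vector [(p$1+q$1)/2 - t*(q$2 - p$2), (p$2+q$2)/2 + t*(q$1 - p$1)]"
definition tau :: "point \<Rightarrow> point \<Rightarrow> point \<Rightarrow> real" where
  "tau p q z = beta p q z / (2*det3 p q z)"
definition tp :: "real \<Rightarrow> point \<Rightarrow> point \<Rightarrow> real" where
  "tp s p q = - (Xc s q - Xc s p) / (2*(Yc s q - Yc s p))"
definition kap :: "real \<Rightarrow> point \<Rightarrow> point \<Rightarrow> real" where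
  "kap s p z = sd z p / (Yc s z - Yc s p)"

lemma cen_sd: "sd z (cen p q t) - sd p (cen p q t) = beta p q z - 2*t*det3 p q z"
  unfolding sd_def cen_def beta_def det3_def by (simp add: power2_eq_square algebra_simps)

lemma memb_iff: "memb p q t z \<longleftrightarrow> sd z (cen p q t) < sd p (cen p q t)"
  using cen_sd[of z p q t] unfolding memb_def by linarith

lemma cen_q: "sd q (cen p q t) = sd p (cen p q t)"
  using cen_sd[of q p q t] by (simp add: beta_def det3_def)

lemma memb_p: "\<not> memb p q t p" by (simp add: memb_def beta_def det3_def)
lemma memb_q: "\<not> memb p q t q" by (simp add: memb_def beta_def det3_def)

lemma cen_tau:
  assumes "det3 p q z \<noteq> 0"
  shows "sd z (cen p q (tau p q z)) = sd p (cen p q (tau p q z))"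
  using cen_sd[of z p q "tau p q z"] assms by (simp add: tau_def)

lemma cen_tau_cc:
  assumes "det3 p q z \<noteq> 0"
  shows "cen p q (tau p q z) = cc p q z"
  by (rule cc_unique) (use assms cen_q cen_tau[OF assms] in auto)

lemma memb_tau_self: "det3 p q z \<noteq> 0 \<Longrightarrow> \<not> memb p q (tau p q z) z"
  unfolding memb_def tau_def by simp

lemma Xc_cen: "Xc s (cen p q t) = (Xc s p + Xc s q)/2 + t*(Yc s q - Yc s p)"
  unfolding Xc_def Yc_def cen_def by (simp add: field_simps)

lemma Xc_cen_tp:
  assumes "Yc s q \<noteq> Yc s p"
  shows "Xc s (cen p q (tp s p q)) = Xc s p"
proof -
  have "tp s p q * (Yc s q - Yc s p) = - (Xc s q - Xc s p) / 2"
    using assms unfolding tp_def by (simp add: field_simps)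
  then show ?thesis unfolding Xc_cen by (simp add: field_simps)
qed

lemma memb_sign:
  assumes "det3 p q z \<noteq> 0"
  shows "memb p q t z \<longleftrightarrow> (if det3 p q z > 0 then tau p q z < t else t < tau p q z)"
proof (cases "det3 p q z > 0")
  case True
  then show ?thesis unfolding memb_def tau_def by (simp add: field_simps mult.commute)
next
  case False
  then have "det3 p q z < 0" using assms by linarith
  then show ?thesis unfolding memb_def tau_def by (simp add: field_simps mult.commute)
qed

lemma memb_tp:
  assumes "Yc s q \<noteq> Yc s p"
  shows "memb p q (tp s p q) z \<longleftrightarrow> sd z p < kap s p q * (Yc s z - Yc s p)"
proof -
  have "beta p q z - 2*(tp s p q)*det3 p q z = sd z p - kap s p q * (Yc s z - Yc s p)"
    using assms unfolding beta_def tp_def det3_def kap_def sd_def Xc_def Yc_def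
    by (simp add: field_simps power2_eq_square)
  then show ?thesis unfolding memb_def by linarith
qed

lemma card_filter_split:
  assumes "finite E" "x \<in> E"
  shows "card {e\<in>E. P e} = card {e\<in>E - {x}. P e} + (if P x then 1 else 0)"
proof -
  have fin: "finite {e\<in>E - {x}. P e}" using assms by auto
  show ?thesis
  proof (cases "P x")
    case True
    then have "{e\<in>E. P e} = insert x {e\<in>E - {x}. P e}" using assms by auto
    then show ?thesis using True fin by simp
  next
    case False
    then have "{e\<in>E. P e} = {e\<in>E - {x}. P e}" by auto
    then show ?thesis using False by simp
  qed
qed

lemma telescope:
  fixes E :: "'a set" and tau :: "'a \<Rightarrow> real" and sg :: "'a \<Rightarrow> bool" and k :: int
  assumes fin: "finite E" and inj: "inj_on tau E" and t0E: "t0 \<notin> tau ` E"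
  shows "of_bool (int (card {e\<in>E. if sg e then tau e < t0 else t0 < tau e}) = k)
       = of_bool (int (card {e\<in>E. sg e}) = k)
         - (\<Sum>e\<in>{e\<in>E. t0 < tau e}. (if sg e then 1 else -1) *
              (of_bool (int (card {e'\<in>E - {e}. if sg e' then tau e' < tau e else tau e < tau e'}) = k - 1)
             - of_bool (int (card {e'\<in>E - {e}. if sg e' then tau e' < tau e else tau e < tau e'}) = k)) :: int)"
proof -
  define Mem where "Mem t e \<longleftrightarrow> (if sg e then tau e < t else t < tau e)" for t e
  define F :: "'a \<Rightarrow> int" where "F e = (if sg e then 1 else -1) *
              (of_bool (int (card {e'\<in>E - {e}. Mem (tau e) e'}) = k - 1)
             - of_bool (int (card {e'\<in>E - {e}. Mem (tau e) e'}) = k)) " for e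
  have "of_bool (int (card {e\<in>E. Mem t0 e}) = k)
       = of_bool (int (card {e\<in>E. sg e}) = k) - (\<Sum>e\<in>{e\<in>E. t0 < tau e}. F e)"
    if "card {e\<in>E. t0 < tau e} = n" "t0 \<notin> tau ` E" for n t0
    using that
  proof (induction n arbitrary: t0)
    case 0
    have "{e\<in>E. t0 < tau e} = {}" using 0 fin by simp
    then have "\<forall>e\<in>E. tau e < t0" using 0(2) by force
    then have "{e\<in>E. Mem t0 e} = {e\<in>E. sg e}" unfolding Mem_def by auto
    then show ?case using \<open>{e\<in>E. t0 < tau e} = {}\<close> by (simp del: Collect_empty_eq)
  next
    case (Suc n)
    define U where "U = {e\<in>E. t0 < tau e}"
    have finU: "finite U" using fin U_def by simp
    have "U \<noteq> {}" using Suc(2) U_def by (metis card.empty nat.distinct(1))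
    define m where "m = Min (tau ` U)"
    have "m \<in> tau ` U" unfolding m_def using finU \<open>U \<noteq> {}\<close> by simp
    then obtain e1 where e1: "e1 \<in> U" "tau e1 = m" by auto
    have e1min: "\<forall>e\<in>U. tau e1 \<le> tau e" using e1 finU m_def by simp
    define U' where "U' = U - {e1}"
    define t1 where "t1 = (if U' = {} then tau e1 + 1 else (tau e1 + Min (tau ` U'))/2)"
    have e1E: "e1 \<in> E" "t0 < tau e1" using e1 U_def by auto
    have t1: "tau e1 < t1"
    proof (cases "U' = {}")
      case False
      have "Min (tau ` U') \<in> tau ` U'" using False finU U'_def by simp
      then obtain e2 where "e2 \<in> U'" "tau e2 = Min (tau ` U')" by auto
      then have "tau e1 < tau e2" using e1min inj U'_def U_def e1E
        by (metis DiffD1 DiffD2 inj_on_eq_iff mem_Collect_eq order_le_less singletonI)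
      then show ?thesis using False t1_def \<open>tau e2 = _\<close> by simp
    qed (simp add: t1_def)
    have key: "tau e \<noteq> t0 \<and> tau e \<noteq> t1 \<and> tau e \<noteq> tau e1 \<and> (tau e < t0 \<longleftrightarrow> tau e < tau e1)
               \<and> (tau e < t1 \<longleftrightarrow> tau e < tau e1) \<and> (t1 < tau e \<longleftrightarrow> e \<in> U')"
      if "e \<in> E" "e \<noteq> e1" for e
    proof -
      have ne: "tau e \<noteq> tau e1" using inj that e1E by (meson inj_on_eq_iff)
      have ne0: "tau e \<noteq> t0" using Suc(3) that by auto
      show ?thesis
      proof (cases "t0 < tau e")
        case True
        then have eU: "e \<in> U'" using that U_def U'_def by auto
        then have "tau e1 < tau e" using e1min ne U'_def by force
        moreover have "tau e > t1"
        proof -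
          have "U' \<noteq> {}" using eU by auto
          moreover have "Min (tau ` U') \<le> tau e" using eU finU U'_def by simp
          ultimately show ?thesis using t1_def \<open>tau e1 < tau e\<close> by simp
        qed
        ultimately show ?thesis using ne0 eU True by auto
      next
        case False
        then have "tau e < t0" using ne0 by simp
        moreover have "e \<notin> U'" using U'_def U_def False by auto
        ultimately show ?thesis using e1E t1 by auto
      qed
    qed
    have t1E: "t1 \<notin> tau ` E"
    proof
      assume "t1 \<in> tau ` E"
      then obtain e where "e \<in> E" "tau e = t1" by auto
      then show False using key t1 by (cases "e = e1") auto
    qed
    have U'eq: "{e\<in>E. t1 < tau e} = U'"
    proof -
      have "e1 \<notin> {e\<in>E. t1 < tau e}" using t1 by auto
      moreover have "e1 \<notin> U'" using U'_def by auto
      ultimately show ?thesis using key U'_def U_def by blast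
    qed
    have cU': "card U' = n" using Suc(2) U_def U'_def e1 finU by simp
    have IH: "of_bool (int (card {e\<in>E. Mem t1 e}) = k)
       = of_bool (int (card {e\<in>E. sg e}) = k) - (\<Sum>e\<in>U'. F e)"
      using Suc.IH[of t1] U'eq cU' t1E by simp
    have memeq: "Mem t0 e = Mem (tau e1) e \<and> Mem t1 e = Mem (tau e1) e" if "e \<in> E" "e \<noteq> e1" for e
      using key[OF that] unfolding Mem_def by auto
    define c where "c = card {e\<in>E - {e1}. Mem (tau e1) e}"
    have "{e\<in>E - {e1}. Mem t0 e} = {e\<in>E - {e1}. Mem (tau e1) e}" using memeq by auto
    then have c0: "card {e\<in>E. Mem t0 e} = c + (if sg e1 then 0 else 1)"
      using card_filter_split[OF fin e1E(1), of "Mem t0"] e1E unfolding c_def Mem_def by auto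
    have "{e\<in>E - {e1}. Mem t1 e} = {e\<in>E - {e1}. Mem (tau e1) e}" using memeq by auto
    then have c1: "card {e\<in>E. Mem t1 e} = c + (if sg e1 then 1 else 0)"
      using card_filter_split[OF fin e1E(1), of "Mem t1"] t1 unfolding c_def Mem_def by auto
    have sumU: "(\<Sum>e\<in>U. F e) = F e1 + (\<Sum>e\<in>U'. F e)"
      using finU e1 U'_def by (simp add: sum.remove)
    have Fe1: "F e1 = (if sg e1 then 1 else -1) * (of_bool (int c = k - 1) - of_bool (int c = k))"
      unfolding F_def c_def by simp
    show ?case
      using IH c0 c1 sumU Fe1 unfolding U_def[symmetric]
      by (cases "sg e1") auto
  qed
  then show ?thesis using t0E unfolding Mem_def F_def by blast
qed

lemma rank_bij:
  fixes f :: "'a \<Rightarrow> 'b::linorder"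
  assumes fin: "finite F" and inj: "inj_on f F"
  shows "bij_betw (\<lambda>x. card {z\<in>F. f z < f x}) F {0..<card F}"
proof -
  let ?r = "\<lambda>x. card {z\<in>F. f z < f x}"
  have lt: "?r x < ?r y" if "x \<in> F" "y \<in> F" "f x < f y" for x y
  proof (rule psubset_card_mono)
    show "finite {z\<in>F. f z < f y}" using fin by simp
    show "{z\<in>F. f z < f x} \<subset> {z\<in>F. f z < f y}" using that by auto
  qed
  have injr: "inj_on ?r F"
  proof (rule inj_onI)
    fix x y assume "x \<in> F" "y \<in> F" "?r x = ?r y"
    show "x = y"
    proof (rule ccontr)
      assume "x \<noteq> y"
      then have "f x \<noteq> f y" using inj \<open>x\<in>F\<close> \<open>y\<in>F\<close> by (auto dest: inj_onD)
      then show False using lt[of x y] lt[of y x] \<open>x\<in>F\<close> \<open>y\<in>F\<close> \<open>?r x = ?r y\<close>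
        by (auto simp: neq_iff)
    qed
  qed
  have sub: "?r ` F \<subseteq> {0..<card F}"
  proof
    fix m assume "m \<in> ?r ` F"
    then obtain x where x: "x \<in> F" "m = ?r x" by auto
    have "{z\<in>F. f z < f x} \<subset> F" using x by auto
    then have "?r x < card F" using fin by (simp add: psubset_card_mono)
    then show "m \<in> {0..<card F}" using x by simp
  qed
  have "card (?r ` F) = card F" using injr by (simp add: card_image)
  then have "?r ` F = {0..<card F}" using sub by (simp add: card_subset_eq)
  then show ?thesis using injr by (simp add: bij_betw_def)
qed

lemma rank_sum:
  fixes f :: "'a \<Rightarrow> 'b::linorder" and g :: "nat \<Rightarrow> 'c::comm_monoid_add"
  assumes "finite F" "inj_on f F"
  shows "(\<Sum>x\<in>F. g (card {z\<in>F. f z < f x})) = (\<Sum>m\<in>{0..<card F}. g m)"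
  using sum.reindex_bij_betw[OF rank_bij[OF assms], of g] by simp

lemma sum_eq_k: "(\<Sum>m\<in>{0..<N::nat}. (of_bool (m = k) :: int)) = of_bool (k < N)"
  by (induction N) (auto simp: of_bool_def)

lemma sum_gt_k: "(\<Sum>m\<in>{0..<N}. (of_bool (k < m) :: int)) = int (N - Suc k)"
  by (induction N) (auto simp: of_bool_def Suc_diff_le)

lemma sd_pos: "a \<noteq> b \<Longrightarrow> sd a b > 0"
  using sd_nonneg[of a b] sd_zero[of a b] by linarith

lemma sd_sym: "sd a b = sd b a" by (simp add: sd_def power2_commute)

definition G1 :: "real \<Rightarrow> point set \<Rightarrow> bool" where
  "G1 s S \<longleftrightarrow> (\<forall>a\<in>S. \<forall>b\<in>S. a \<noteq> b \<longrightarrow> Yc s a \<noteq> Yc s b)"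
definition G2 :: "real \<Rightarrow> point set \<Rightarrow> bool" where
  "G2 s S \<longleftrightarrow> (\<forall>a\<in>S. \<forall>b\<in>S. \<forall>c\<in>S. a \<noteq> b \<and> a \<noteq> c \<and> b \<noteq> c \<longrightarrow> Xc s (cc a b c) \<noteq> Xc s a)"

lemma generic_exists:
  assumes fin: "finite S" and gp: "general_position S"
  shows "\<exists>s. G1 s S \<and> G2 s S"
proof -
  define B1 where "B1 = (\<lambda>(a,b). - (a$1 - b$1)/(a$2 - b$2)) ` (S \<times> S)"
  define B2 where "B2 = (\<lambda>(a,b,c). ((cc a b c)$2 - a$2)/((cc a b c)$1 - a$1)) ` (S \<times> S \<times> S)"
  have "finite B1" unfolding B1_def using fin by (intro finite_imageI finite_cartesian_product)
  moreover have "finite B2" unfolding B2_def using fin by (intro finite_imageI finite_cartesian_product)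
  ultimately have "finite (B1 \<union> B2)" by simp
  then obtain s where s: "s \<notin> B1 \<union> B2" using ex_new_if_finite[OF infinite_UNIV_char_0] by blast
  have "G1 s S" unfolding G1_def
  proof (intro ballI impI notI)
    fix a b assume ab: "a \<in> S" "b \<in> S" "a \<noteq> b" "Yc s a = Yc s b"
    then have e: "a$1 - b$1 + s*(a$2 - b$2) = 0" unfolding Yc_def by (simp add: algebra_simps)
    have "a$2 \<noteq> b$2"
    proof
      assume "a$2 = b$2"
      then have "a$1 = b$1" using e by simp
      then show False using point_eqI[of a b] \<open>a$2 = b$2\<close> ab(3) by simp
    qed
    then have sdef: "s = - (a$1 - b$1)/(a$2 - b$2)" using e by (simp add: field_simps)
    have "s \<in> B1" unfolding B1_def
      apply (rule rev_image_eqI[of "(a,b)"])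
      using ab sdef by auto
    then show False using s by simp
  qed
  moreover have "G2 s S" unfolding G2_def
  proof (intro ballI impI notI)
    fix a b c assume abc: "a \<in> S" "b \<in> S" "c \<in> S" "a \<noteq> b \<and> a \<noteq> c \<and> b \<noteq> c"
      "Xc s (cc a b c) = Xc s a"
    have D: "det3 a b c \<noteq> 0" using gp_noncol[OF gp abc(1-3)] abc(4) by simp
    let ?O = "cc a b c"
    have e: "?O$2 - a$2 = s*(?O$1 - a$1)" using abc(5) unfolding Xc_def by (simp add: algebra_simps)
    have "?O$1 \<noteq> a$1"
    proof
      assume h: "?O$1 = a$1"
      have h2: "?O$2 = a$2" using e h by simp
      have "?O = a" by (rule point_eqI[OF h h2])
      then have "sd b a = sd a a" using cc_eq(1)[OF D] by simp
      then have "sd b a = 0" by (simp add: sd_def)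
      then show False using abc(4) sd_zero[of b a] by simp
    qed
    then have sdef: "s = (?O$2 - a$2)/(?O$1 - a$1)" using e by (simp add: field_simps)
    have "s \<in> B2" unfolding B2_def
      apply (rule rev_image_eqI[of "(a,b,c)"])
      using abc sdef by auto
    then show False using s by simp
  qed
  ultimately show ?thesis by blast
qed

lemma det_X_identity:
  assumes D: "det3 p q e \<noteq> 0"
  shows "det3 p q e * (Xc s (cc p q e) - Xc s p) = (sd e p * (Yc s q - Yc s p) - sd q p * (Yc s e - Yc s p))/2"
proof -
  define A1 where "A1 = q$1 - p$1"
  define A2 where "A2 = q$2 - p$2"
  define B1 where "B1 = e$1 - p$1"
  define B2 where "B2 = e$2 - p$2"
  have d: "det3 p q e = A1*B2 - A2*B1" unfolding det3_def A1_def A2_def B1_def B2_def by simp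
  have x: "Xc s (cc p q e) - Xc s p = (((B1^2+B2^2)*A1 - (A1^2+A2^2)*B1) - s*((A1^2+A2^2)*B2 - (B1^2+B2^2)*A2))/(2*det3 p q e)"
    unfolding Xc_def cc_comp[OF D] A1_def A2_def B1_def B2_def using D
    by (simp add: field_simps)
  have r: "(sd e p * (Yc s q - Yc s p) - sd q p * (Yc s e - Yc s p))/2
     = ((B1^2+B2^2)*(A1 + s*A2) - (A1^2+A2^2)*(B1 + s*B2))/2"
    unfolding sd_def Yc_def A1_def A2_def B1_def B2_def by (simp add: algebra_simps)
  have xy: "((B1^2+B2^2)*A1 - (A1^2+A2^2)*B1) - s*((A1^2+A2^2)*B2 - (B1^2+B2^2)*A2)
     = (B1^2+B2^2)*(A1 + s*A2) - (A1^2+A2^2)*(B1 + s*B2)" by (simp add: algebra_simps)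
  show ?thesis unfolding x r xy using D by simp
qed

definition om :: "real \<Rightarrow> point \<Rightarrow> point \<Rightarrow> point \<Rightarrow> int" where
  "om s p q e = (if det3 p q e > 0 then 1 else -1) *
      of_bool ((Yc s q - Yc s p) * (Xc s (cc p q e) - Xc s p) > 0)"

lemma pair_contrib:
  assumes D: "det3 p q e \<noteq> 0" and "p \<noteq> q" "p \<noteq> e"
    and a: "Yc s q \<noteq> Yc s p" and b: "Yc s e \<noteq> Yc s p" and X: "Xc s (cc p q e) \<noteq> Xc s p"
  shows "om s p q e + om s p e q = of_bool ((Yc s q - Yc s p) * (Yc s e - Yc s p) < 0)"
proof -
  define A where "A = Yc s q - Yc s p"
  define B where "B = Yc s e - Yc s p"
  define Dl where "Dl = Xc s (cc p q e) - Xc s p"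
  define d where "d = det3 p q e"
  have sq: "sd q p > 0" "sd e p > 0" using assms sd_pos by auto
  have id: "d * Dl = (sd e p * A - sd q p * B)/2"
    unfolding d_def Dl_def A_def B_def using det_X_identity[OF D] by simp
  have sw: "cc p e q = cc p q e" using cc_swap23[OF D] .
  have dsw: "det3 p e q = - d" unfolding d_def by (rule det3_swap23)
  have o1: "om s p q e = (if d > 0 then 1 else -1) * of_bool (A * Dl > 0)"
    unfolding om_def A_def Dl_def d_def by simp
  have nz: "A \<noteq> 0" "B \<noteq> 0" "Dl \<noteq> 0" "d \<noteq> 0" using assms unfolding A_def B_def Dl_def d_def by auto
  have o2: "om s p e q = (if d > 0 then -1 else 1) * of_bool (B * Dl > 0)"
  proof -
    have "om s p e q = (if - d > 0 then 1 else -1) * of_bool (B * Dl > 0)"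
      unfolding om_def B_def Dl_def sw dsw by simp
    then show ?thesis using nz(4) by (cases "d > 0") auto
  qed
  have c1: "d * Dl > 0" if "A > 0" "B < 0"
  proof -
    have "sd e p * A > 0" using sq that by simp
    moreover have "sd q p * B < 0" using sq that by (simp add: mult_pos_neg)
    ultimately have "(sd e p * A - sd q p * B)/2 > 0" by simp
    then show ?thesis unfolding id .
  qed
  have c2: "d * Dl < 0" if "A < 0" "B > 0"
  proof -
    have "sd e p * A < 0" using sq that by (simp add: mult_pos_neg)
    moreover have "sd q p * B > 0" using sq that by simp
    ultimately have "(sd e p * A - sd q p * B)/2 < 0" by simp
    then show ?thesis unfolding id .
  qed
  have "A > 0 \<or> A < 0" "B > 0 \<or> B < 0" "d > 0 \<or> d < 0" "Dl > 0 \<or> Dl < 0" using nz by linarith+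
  then consider (a) "A>0" "B>0" | (b) "A>0" "B<0" | (c) "A<0" "B>0" | (d) "A<0" "B<0" by blast
  then show ?thesis
  proof cases
    case a
    then have "A * B > 0" by simp
    then show ?thesis unfolding o1 o2 A_def[symmetric] B_def[symmetric] using a
      by (simp add: zero_less_mult_iff mult_less_0_iff)
  next
    case d
    then have "A * B > 0" by (simp add: mult_neg_neg)
    then show ?thesis unfolding o1 o2 A_def[symmetric] B_def[symmetric] using d
      by (simp add: zero_less_mult_iff mult_less_0_iff)
  next
    case b
    then have dd: "d * Dl > 0" using c1 by simp
    have ab: "A * B < 0" using b by (simp add: mult_pos_neg)
    show ?thesis unfolding o1 o2 A_def[symmetric] B_def[symmetric] using b dd ab \<open>d > 0 \<or> d < 0\<close>
      by (auto simp: zero_less_mult_iff)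
  next
    case c
    then have dd: "d * Dl < 0" using c2 by simp
    have ab: "A * B < 0" using c by (simp add: mult_neg_pos)
    show ?thesis unfolding o1 o2 A_def[symmetric] B_def[symmetric] using c dd ab \<open>d > 0 \<or> d < 0\<close>
      by (auto simp: zero_less_mult_iff mult_less_0_iff)
  qed
qed

lemma middle_one:
  fixes x y z :: real
  assumes "x \<noteq> y" "x \<noteq> z" "y \<noteq> z"
  shows "of_bool ((y - x) * (z - x) < 0) + of_bool ((x - y) * (z - y) < 0)
         + of_bool ((x - z) * (y - z) < 0) = (1::int)"
  using assms
  by (cases x y rule: linorder_cases; cases y z rule: linorder_cases; cases x z rule: linorder_cases)
     (auto simp: mult_less_0_iff)

lemma W_one:
  assumes D: "det3 a b c \<noteq> 0" and d: "a \<noteq> b" "a \<noteq> c" "b \<noteq> c"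
    and Y: "Yc s a \<noteq> Yc s b" "Yc s a \<noteq> Yc s c" "Yc s b \<noteq> Yc s c"
    and X: "Xc s (cc a b c) \<noteq> Xc s a" "Xc s (cc a b c) \<noteq> Xc s b" "Xc s (cc a b c) \<noteq> Xc s c"
  shows "om s a b c + om s a c b + om s b a c + om s b c a + om s c a b + om s c b a = 1"
proof -
  have Dbac: "det3 b a c \<noteq> 0" using D det3_swap12[of a b c] by simp
  have Dacb: "det3 a c b \<noteq> 0" using D det3_swap23[of a b c] by simp
  have Dcab: "det3 c a b \<noteq> 0" using Dacb det3_swap12[of a c b] by simp
  have e1: "cc b a c = cc a b c" using cc_swap12[OF D] .
  have e2: "cc c a b = cc a b c" using cc_swap12[OF Dacb] cc_swap23[OF D] by simp
  have p1: "om s a b c + om s a c b = of_bool ((Yc s b - Yc s a) * (Yc s c - Yc s a) < 0)"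
    by (rule pair_contrib) (use D d Y X in auto)
  have p2: "om s b a c + om s b c a = of_bool ((Yc s a - Yc s b) * (Yc s c - Yc s b) < 0)"
    by (rule pair_contrib) (use Dbac d Y X e1 in auto)
  have p3: "om s c a b + om s c b a = of_bool ((Yc s a - Yc s c) * (Yc s b - Yc s c) < 0)"
    by (rule pair_contrib) (use Dcab d Y X e2 in auto)
  have "om s a b c + om s a c b + om s b a c + om s b c a + om s c a b + om s c b a
     = (om s a b c + om s a c b) + (om s b a c + om s b c a) + (om s c a b + om s c b a)"
    by simp
  also have "\<dots> = 1" unfolding p1 p2 p3 by (rule middle_one) (use Y in auto)
  finally show ?thesis .
qed

definition lev :: "real \<Rightarrow> point set \<Rightarrow> point \<Rightarrow> point \<Rightarrow> nat" where
  "lev s S p q = card {z\<in>S. memb p q (tp s p q) z}"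
definition Lft :: "point set \<Rightarrow> point \<Rightarrow> point \<Rightarrow> point set" where
  "Lft S p q = {x\<in>S. det3 p q x > 0}"
definition jT :: "point set \<Rightarrow> point set \<Rightarrow> nat" where
  "jT S T = card {z\<in>S. in_circumdisk T z}"
definition gk :: "int \<Rightarrow> nat \<Rightarrow> int" where
  "gk k j = of_bool (int j = k - 1) - of_bool (int j = k)"

lemma per_pair:
  assumes fin: "finite S" and gp: "general_position S" and g1: "G1 s S" and g2: "G2 s S"
    and pq: "p \<in> S" "q \<in> S" "p \<noteq> q"
  shows "of_bool (int (lev s S p q) = k) = of_bool (int (card (Lft S p q)) = k)
           - (\<Sum>e\<in>S - {p,q}. om s p q e * gk k (jT S {p,q,e}))"
proof -
  define E where "E = S - {p,q}"
  define t0 where "t0 = tp s p q"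
  define sg where "sg e \<longleftrightarrow> det3 p q e > 0" for e
  have finE: "finite E" using fin E_def by simp
  have detE: "det3 p q e \<noteq> 0" if "e \<in> E" for e
    using gp_noncol[OF gp pq(1,2)] that pq(3) unfolding E_def by auto
  have Ypq: "Yc s q \<noteq> Yc s p" using g1 pq unfolding G1_def by metis
  have injE: "inj_on (tau p q) E"
  proof (rule inj_onI, rule ccontr)
    fix e e' assume h: "e \<in> E" "e' \<in> E" "tau p q e = tau p q e'" "e \<noteq> e'"
    define C where "C = cen p q (tau p q e)"
    have "sd e C = sd p C" unfolding C_def by (rule cen_tau[OF detE[OF h(1)]])
    moreover have "sd e' C = sd p C" unfolding C_def h(3) by (rule cen_tau[OF detE[OF h(2)]])
    moreover have "sd q C = sd p C" unfolding C_def by (rule cen_q)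
    ultimately show False
      using gp_nococirc[OF gp pq(1,2), of e e' C] h pq unfolding E_def by auto
  qed
  have Xdiff: "Xc s (cc p q e) - Xc s p = (tau p q e - t0) * (Yc s q - Yc s p)" if "e \<in> E" for e
  proof -
    have "Xc s (cc p q e) = Xc s (cen p q (tau p q e))" using cen_tau_cc[OF detE[OF that]] by simp
    moreover have "Xc s p = Xc s (cen p q t0)" unfolding t0_def using Xc_cen_tp[OF Ypq] by simp
    ultimately show ?thesis unfolding Xc_cen by (simp add: algebra_simps)
  qed
  have t0E: "t0 \<notin> tau p q ` E"
  proof
    assume "t0 \<in> tau p q ` E"
    then obtain e where e: "e \<in> E" "tau p q e = t0" by auto
    then have "Xc s (cc p q e) = Xc s p" using Xdiff[OF e(1)] by simp
    moreover have "e \<in> S" "e \<noteq> p" "e \<noteq> q" using e E_def by auto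
    ultimately show False using g2 pq unfolding G2_def by metis
  qed
  note tel = telescope[OF finE injE t0E, of sg k]
  have s1: "{z\<in>S. memb p q t0 z} = {e\<in>E. if sg e then tau p q e < t0 else t0 < tau p q e}"
  proof -
    have h: "memb p q t0 z \<longleftrightarrow> (if sg z then tau p q z < t0 else t0 < tau p q z)" if "z \<in> E" for z
      using memb_sign[OF detE[OF that]] unfolding sg_def by simp
    show ?thesis
    proof (rule set_eqI)
      fix z
      show "z \<in> {z\<in>S. memb p q t0 z} \<longleftrightarrow> z \<in> {e\<in>E. if sg e then tau p q e < t0 else t0 < tau p q e}"
      proof (cases "z = p \<or> z = q")
        case True then show ?thesis using memb_p[of p q t0] memb_q[of p q t0] unfolding E_def by auto
      next
        case False then show ?thesis using h[of z] unfolding E_def by auto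
      qed
    qed
  qed
  have s2: "{e\<in>E. sg e} = Lft S p q"
    unfolding E_def Lft_def sg_def by (auto simp: det3_def)
  have s3: "{e'\<in>E - {e}. if sg e' then tau p q e' < tau p q e else tau p q e < tau p q e'}
            = {z\<in>S. in_circumdisk {p,q,e} z}" if "e \<in> E" for e
  proof -
    have D: "det3 p q e \<noteq> 0" using detE[OF that] .
    have ci: "in_circumdisk {p,q,e} z \<longleftrightarrow> memb p q (tau p q e) z" for z
      unfolding circdisk_iff[OF D] memb_iff cen_tau_cc[OF D] ..
    have h: "memb p q (tau p q e) z \<longleftrightarrow> (if sg z then tau p q z < tau p q e else tau p q e < tau p q z)"
      if "z \<in> E" for z
      using memb_sign[OF detE[OF that]] unfolding sg_def by simp
    have h2: "\<not> memb p q (tau p q e) e" by (rule memb_tau_self[OF D])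
    show ?thesis
    proof (rule set_eqI)
      fix z
      show "z \<in> {e'\<in>E - {e}. if sg e' then tau p q e' < tau p q e else tau p q e < tau p q e'}
            \<longleftrightarrow> z \<in> {z\<in>S. in_circumdisk {p,q,e} z}"
      proof (cases "z = p \<or> z = q \<or> z = e")
        case True then show ?thesis unfolding ci
          using memb_p[of p q "tau p q e"] memb_q[of p q "tau p q e"] h2 unfolding E_def by auto
      next
        case False then show ?thesis unfolding ci using h[of z] unfolding E_def by auto
      qed
    qed
  qed
  have s4: "(t0 < tau p q e) \<longleftrightarrow> (Yc s q - Yc s p) * (Xc s (cc p q e) - Xc s p) > 0" if "e \<in> E" for e
  proof -
    have "(Yc s q - Yc s p) * (Xc s (cc p q e) - Xc s p) = (tau p q e - t0) * (Yc s q - Yc s p)^2"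
      unfolding Xdiff[OF that] by (simp add: power2_eq_square algebra_simps)
    moreover have "(Yc s q - Yc s p)^2 > 0" using Ypq by simp
    ultimately show ?thesis by (simp add: zero_less_mult_iff)
  qed
  have sumeq: "(\<Sum>e\<in>{e\<in>E. t0 < tau p q e}. (if sg e then 1 else -1) *
              (of_bool (int (card {e'\<in>E - {e}. if sg e' then tau p q e' < tau p q e else tau p q e < tau p q e'}) = k - 1)
             - of_bool (int (card {e'\<in>E - {e}. if sg e' then tau p q e' < tau p q e else tau p q e < tau p q e'}) = k)) :: int)
        = (\<Sum>e\<in>E. om s p q e * gk k (jT S {p,q,e}))"
    unfolding sum.inter_filter[OF finE]
  proof (rule sum.cong)
    fix e assume e: "e \<in> E"
    show "(if t0 < tau p q e then (if sg e then 1 else -1) *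
              (of_bool (int (card {e'\<in>E - {e}. if sg e' then tau p q e' < tau p q e else tau p q e < tau p q e'}) = k - 1)
             - of_bool (int (card {e'\<in>E - {e}. if sg e' then tau p q e' < tau p q e else tau p q e < tau p q e'}) = k)) else 0)
        = om s p q e * gk k (jT S {p,q,e})"
      unfolding s3[OF e] s4[OF e] unfolding om_def gk_def jT_def sg_def by simp
  qed simp
  show ?thesis
    using tel unfolding s1[symmetric] s2 sumeq t0_def[symmetric] lev_def E_def[symmetric] .
qed

lemma G2D: "G2 s S \<Longrightarrow> a\<in>S \<Longrightarrow> b\<in>S \<Longrightarrow> c\<in>S \<Longrightarrow> a \<noteq> b \<Longrightarrow> a \<noteq> c \<Longrightarrow> b \<noteq> c
   \<Longrightarrow> Xc s (cc a b c) \<noteq> Xc s a"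
  unfolding G2_def by blast

lemma G1D: "G1 s S \<Longrightarrow> a\<in>S \<Longrightarrow> b\<in>S \<Longrightarrow> a \<noteq> b \<Longrightarrow> Yc s a \<noteq> Yc s b"
  unfolding G1_def by blast

lemma kap_center:
  fixes p z :: point and s :: real
  defines "C \<equiv> vector [p$1 + kap s p z / 2, p$2 + s * kap s p z / 2] :: point"
  assumes "Yc s z \<noteq> Yc s p"
  shows "sd z C = sd p C" "Xc s C = Xc s p"
proof -
  have k: "kap s p z * (Yc s z - Yc s p) = sd z p" unfolding kap_def using assms(2) by simp
  have "sd z C - sd p C = sd z p - kap s p z * (Yc s z - Yc s p)"
    unfolding C_def sd_def Yc_def by (simp add: power2_eq_square algebra_simps)
  then show "sd z C = sd p C" using k by simp
  show "Xc s C = Xc s p" unfolding C_def Xc_def by (simp add: algebra_simps)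
qed

lemma kap_inj:
  assumes gp: "general_position S" and g2: "G2 s S" and p: "p \<in> S"
    and F: "F \<subseteq> S" "\<forall>z\<in>F. Yc s z \<noteq> Yc s p"
  shows "inj_on (kap s p) F"
proof (rule inj_onI, rule ccontr)
  fix z z' assume h: "z \<in> F" "z' \<in> F" "kap s p z = kap s p z'" "z \<noteq> z'"
  define C where "C = (vector [p$1 + kap s p z / 2, p$2 + s * kap s p z / 2] :: point)"
  have C': "C = vector [p$1 + kap s p z' / 2, p$2 + s * kap s p z' / 2]" using h(3) C_def by simp
  have Yz: "Yc s z \<noteq> Yc s p" "Yc s z' \<noteq> Yc s p" using F h by auto
  have zp: "z \<noteq> p" "z' \<noteq> p" using Yz by auto
  have e1: "sd z C = sd p C" "Xc s C = Xc s p" using kap_center[OF Yz(1)] C_def by auto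
  have e2: "sd z' C = sd p C" using kap_center(1)[OF Yz(2)] C' by simp
  have D: "det3 p z z' \<noteq> 0" using gp_noncol[OF gp p] F h zp by auto
  have "C = cc p z z'" by (rule cc_unique[OF D]) (use e1 e2 in auto)
  then have "Xc s (cc p z z') = Xc s p" using e1 by simp
  moreover have "z \<in> S" "z' \<in> S" using F h by auto
  ultimately show False using G2D[OF g2 p, of z z'] zp h(4) by simp
qed

lemma Zk:
  assumes fin: "finite S" and gp: "general_position S" and g1: "G1 s S" and g2: "G2 s S"
  shows "(\<Sum>p\<in>S. \<Sum>q\<in>S - {p}. (of_bool (int (lev s S p q) = int k) :: int)) = 2 * int (card S - Suc k)"
proof -
  have inner: "(\<Sum>q\<in>S - {p}. (of_bool (int (lev s S p q) = int k) :: int))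
     = of_bool (k < card {z\<in>S. - Yc s z < - Yc s p}) + of_bool (k < card {z\<in>S. Yc s z < Yc s p})"
    if p: "p \<in> S" for p
  proof -
    define Ab where "Ab = {z\<in>S. - Yc s z < - Yc s p}"
    define Be where "Be = {z\<in>S. Yc s z < Yc s p}"
    have Ab': "Ab = {z\<in>S. Yc s p < Yc s z}" unfolding Ab_def by auto
    have finAB: "finite Ab" "finite Be" using fin Ab_def Be_def by auto
    have split: "S - {p} = Ab \<union> Be" "Ab \<inter> Be = {}"
    proof -
      have "Yc s z \<noteq> Yc s p" if "z \<in> S" "z \<noteq> p" for z using G1D[OF g1 that(1) p that(2)] .
      then show "S - {p} = Ab \<union> Be" "Ab \<inter> Be = {}" unfolding Ab' Be_def
        by (auto simp: neq_iff)
    qed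
    have Ypos: "Yc s z - Yc s p > 0" if "z \<in> Ab" for z using that Ab' by simp
    have Yneg: "Yc s z - Yc s p < 0" if "z \<in> Be" for z using that Be_def by simp
    have levA: "lev s S p q = card {z\<in>Ab. kap s p z < kap s p q}" if q: "q \<in> Ab" for q
    proof -
      have qp: "q \<noteq> p" using Ypos[OF q] by auto
      have kpos: "kap s p q > 0" unfolding kap_def using Ypos[OF q] sd_pos[OF qp] by simp
      have "{z\<in>S. memb p q (tp s p q) z} = {z\<in>Ab. kap s p z < kap s p q}"
      proof (rule set_eqI)
        fix z
        show "z \<in> {z\<in>S. memb p q (tp s p q) z} \<longleftrightarrow> z \<in> {z\<in>Ab. kap s p z < kap s p q}"
        proof (cases "z \<in> Ab")
          case True
          have "memb p q (tp s p q) z \<longleftrightarrow> sd z p < kap s p q * (Yc s z - Yc s p)"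
            using memb_tp[of s q p z] Ypos[OF q] by simp
          also have "\<dots> \<longleftrightarrow> kap s p z < kap s p q"
            unfolding kap_def[of s p z] using Ypos[OF True] by (simp add: pos_divide_less_eq)
          finally show ?thesis using True Ab' by auto
        next
          case False
          then have "z \<notin> S \<or> Yc s z - Yc s p \<le> 0" using Ab' by auto
          moreover have "kap s p q * (Yc s z - Yc s p) \<le> sd z p" if "Yc s z - Yc s p \<le> 0"
            using kpos that sd_nonneg[of z p] by (smt (verit) mult_nonneg_nonpos)
          ultimately show ?thesis using memb_tp[of s q p z] Ypos[OF q] False by auto
        qed
      qed
      then show ?thesis unfolding lev_def by simp
    qed
    have levB: "lev s S p q = card {z\<in>Be. - kap s p z < - kap s p q}" if q: "q \<in> Be" for q
    proof -
      have qp: "q \<noteq> p" using Yneg[OF q] by auto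
      have kneg: "kap s p q < 0" unfolding kap_def using Yneg[OF q] sd_pos[OF qp] by (simp add: divide_pos_neg)
      have "{z\<in>S. memb p q (tp s p q) z} = {z\<in>Be. - kap s p z < - kap s p q}"
      proof (rule set_eqI)
        fix z
        show "z \<in> {z\<in>S. memb p q (tp s p q) z} \<longleftrightarrow> z \<in> {z\<in>Be. - kap s p z < - kap s p q}"
        proof (cases "z \<in> Be")
          case True
          have "memb p q (tp s p q) z \<longleftrightarrow> sd z p < kap s p q * (Yc s z - Yc s p)"
            using memb_tp[of s q p z] Yneg[OF q] by simp
          also have "\<dots> \<longleftrightarrow> kap s p q < kap s p z"
            unfolding kap_def[of s p z] using Yneg[OF True] by (simp add: neg_less_divide_eq)
          finally show ?thesis using True Be_def by auto
        next
          case False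
          then have "z \<notin> S \<or> Yc s z - Yc s p \<ge> 0" using Be_def by auto
          moreover have "kap s p q * (Yc s z - Yc s p) \<le> sd z p" if "Yc s z - Yc s p \<ge> 0"
            using kneg that sd_nonneg[of z p] by (smt (verit) mult_nonpos_nonneg)
          ultimately show ?thesis using memb_tp[of s q p z] Yneg[OF q] False by auto
        qed
      qed
      then show ?thesis unfolding lev_def by simp
    qed
    have injA: "inj_on (kap s p) Ab"
      by (rule kap_inj[OF gp g2 p]) (use Ypos in \<open>auto simp: Ab'\<close>)
    have injB: "inj_on (\<lambda>z. - kap s p z) Be"
    proof -
      have "inj_on (kap s p) Be" by (rule kap_inj[OF gp g2 p]) (use Yneg in \<open>auto simp: Be_def\<close>)
      then show ?thesis by (simp add: inj_on_def)
    qed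
    have sA: "(\<Sum>q\<in>Ab. (of_bool (int (lev s S p q) = int k) :: int)) = of_bool (k < card Ab)"
    proof -
      have "(\<Sum>q\<in>Ab. (of_bool (int (lev s S p q) = int k) :: int))
          = (\<Sum>q\<in>Ab. (\<lambda>m. of_bool (m = k)) (card {z\<in>Ab. kap s p z < kap s p q}))"
        by (rule sum.cong) (auto simp: levA)
      also have "\<dots> = (\<Sum>m\<in>{0..<card Ab}. of_bool (m = k))"
        by (rule rank_sum[OF finAB(1) injA])
      finally show ?thesis using sum_eq_k by simp
    qed
    have sB: "(\<Sum>q\<in>Be. (of_bool (int (lev s S p q) = int k) :: int)) = of_bool (k < card Be)"
    proof -
      have "(\<Sum>q\<in>Be. (of_bool (int (lev s S p q) = int k) :: int))
          = (\<Sum>q\<in>Be. (\<lambda>m. of_bool (m = k)) (card {z\<in>Be. - kap s p z < - kap s p q}))"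
        by (rule sum.cong) (auto simp: levB)
      also have "\<dots> = (\<Sum>m\<in>{0..<card Be}. of_bool (m = k))"
        by (rule rank_sum[OF finAB(2) injB])
      finally show ?thesis using sum_eq_k by simp
    qed
    have "(\<Sum>q\<in>S - {p}. (of_bool (int (lev s S p q) = int k) :: int)) = of_bool (k < card Ab) + of_bool (k < card Be)"
      unfolding split(1) sum.union_disjoint[OF finAB split(2)] sA sB ..
    then show ?thesis unfolding Ab_def Be_def .
  qed
  have injY: "inj_on (Yc s) S" using g1 unfolding G1_def inj_on_def by metis
  have injY': "inj_on (\<lambda>z. - Yc s z) S" using injY by (simp add: inj_on_def)
  have "(\<Sum>p\<in>S. \<Sum>q\<in>S - {p}. (of_bool (int (lev s S p q) = int k) :: int))
      = (\<Sum>p\<in>S. (\<lambda>m. of_bool (k < m)) (card {z\<in>S. - Yc s z < - Yc s p}))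
        + (\<Sum>p\<in>S. (\<lambda>m. of_bool (k < m)) (card {z\<in>S. Yc s z < Yc s p}))"
  proof -
    have "(\<Sum>p\<in>S. \<Sum>q\<in>S - {p}. (of_bool (int (lev s S p q) = int k) :: int))
       = (\<Sum>p\<in>S. (\<lambda>m. of_bool (k < m)) (card {z\<in>S. - Yc s z < - Yc s p})
                  + (\<lambda>m. of_bool (k < m)) (card {z\<in>S. Yc s z < Yc s p}))"
      by (rule sum.cong[OF refl]) (use inner in simp)
    then show ?thesis by (simp only: sum.distrib)
  qed
  also have "\<dots> = (\<Sum>m\<in>{0..<card S}. of_bool (k < m)) + (\<Sum>m\<in>{0..<card S}. of_bool (k < m))"
    unfolding rank_sum[OF fin injY', of "\<lambda>m. (of_bool (k < m) :: int)"]
      rank_sum[OF fin injY, of "\<lambda>m. (of_bool (k < m) :: int)"] ..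
  also have "\<dots> = 2 * int (card S - Suc k)" unfolding sum_gt_k by simp
  finally show ?thesis .
qed

definition NN :: "point set \<Rightarrow> nat \<Rightarrow> nat" where
  "NN S k = card {(p,q). p\<in>S \<and> q\<in>S \<and> p \<noteq> q \<and> card (Lft S p q) = k}"

lemma sum_of_bool_card:
  "finite A \<Longrightarrow> (\<Sum>x\<in>A. (of_bool (P x) :: int)) = int (card {x\<in>A. P x})"
  by (simp add: sum.inter_filter[symmetric] of_bool_def)

lemma fiber6:
  fixes S :: "point set" and a b c :: point
  assumes abc: "a \<in> S" "b \<in> S" "c \<in> S" "a \<noteq> b" "a \<noteq> c" "b \<noteq> c"
  shows "{y \<in> Sigma (Sigma S (\<lambda>p. S - {p})) (\<lambda>x. S - {fst x, snd x}).
            (\<lambda>((p,q),e). {p,q,e}) y = {a,b,c}}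
         = {((a,b),c), ((a,c),b), ((b,a),c), ((b,c),a), ((c,a),b), ((c,b),a)}"
proof (rule set_eqI)
  fix y :: "(point \<times> point) \<times> point"
  obtain p q e where y: "y = ((p,q),e)" by (metis prod.collapse)
  show "y \<in> {y \<in> Sigma (Sigma S (\<lambda>p. S - {p})) (\<lambda>x. S - {fst x, snd x}).
            (\<lambda>((p,q),e). {p,q,e}) y = {a,b,c}}
       \<longleftrightarrow> y \<in> {((a,b),c), ((a,c),b), ((b,a),c), ((b,c),a), ((c,a),b), ((c,b),a)}"
  proof
    assume h: "y \<in> {y \<in> Sigma (Sigma S (\<lambda>p. S - {p})) (\<lambda>x. S - {fst x, snd x}).
            (\<lambda>((p,q),e). {p,q,e}) y = {a,b,c}}"
    then have d: "p \<noteq> q" "e \<noteq> p" "e \<noteq> q" and eq: "{p,q,e} = {a,b,c}" using y by auto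
    have "p \<in> {a,b,c}" "q \<in> {a,b,c}" "e \<in> {a,b,c}" using eq by blast+
    moreover have "a \<in> {p,q,e}" "b \<in> {p,q,e}" "c \<in> {p,q,e}" using eq by blast+
    ultimately show "y \<in> {((a,b),c), ((a,c),b), ((b,a),c), ((b,c),a), ((c,a),b), ((c,b),a)}"
      using d abc unfolding y by auto
  next
    assume "y \<in> {((a,b),c), ((a,c),b), ((b,a),c), ((b,c),a), ((c,a),b), ((c,b),a)}"
    then show "y \<in> {y \<in> Sigma (Sigma S (\<lambda>p. S - {p})) (\<lambda>x. S - {fst x, snd x}).
            (\<lambda>((p,q),e). {p,q,e}) y = {a,b,c}}"
      using abc by (auto simp: insert_commute)
  qed
qed

lemma group_sum:
  assumes fin: "finite S" and gp: "general_position S" and g1: "G1 s S" and g2: "G2 s S"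
  shows "(\<Sum>x\<in>Sigma S (\<lambda>p. S - {p}). \<Sum>e\<in>S - {fst x, snd x}.
            om s (fst x) (snd x) e * gk k (jT S {fst x, snd x, e}))
         = (\<Sum>T\<in>{T. T \<subseteq> S \<and> card T = 3}. gk k (jT S T))"
proof -
  define P2 where "P2 = Sigma S (\<lambda>p. S - {p})"
  define Q where "Q = Sigma P2 (\<lambda>x. S - {fst x, snd x})"
  define T3 where "T3 = {T. T \<subseteq> S \<and> card T = 3}"
  define key :: "(point \<times> point) \<times> point \<Rightarrow> point set" where "key = (\<lambda>((p,q),e). {p,q,e})"
  define H where "H = (\<lambda>((p,q),e). om s p q e * gk k (jT S {p,q,e}))"
  have finP2: "finite P2" unfolding P2_def using fin by auto
  have finQ: "finite Q" unfolding Q_def using finP2 fin by auto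
  have "T3 \<subseteq> Pow S" unfolding T3_def by auto
  then have finT3: "finite T3" using fin by (simp add: finite_subset)
  have Hx: "H (x,e) = om s (fst x) (snd x) e * gk k (jT S {fst x, snd x, e})" for x e
    by (cases x) (simp add: H_def)
  have step1: "(\<Sum>x\<in>P2. \<Sum>e\<in>S - {fst x, snd x}. om s (fst x) (snd x) e * gk k (jT S {fst x, snd x, e}))
      = (\<Sum>y\<in>Q. H y)"
  proof -
    have "(\<Sum>x\<in>P2. \<Sum>e\<in>S - {fst x, snd x}. om s (fst x) (snd x) e * gk k (jT S {fst x, snd x, e}))
        = (\<Sum>x\<in>P2. \<Sum>e\<in>S - {fst x, snd x}. H (x,e))" by (simp only: Hx)
    also have "\<dots> = (\<Sum>(x,e)\<in>Q. H (x,e))" unfolding Q_def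
      by (rule sum.Sigma) (use finP2 fin in auto)
    also have "\<dots> = (\<Sum>y\<in>Q. H y)" by (simp add: case_prod_beta')
    finally show ?thesis .
  qed
  have keyQ: "key ` Q \<subseteq> T3"
  proof
    fix T assume "T \<in> key ` Q"
    then obtain p q e where "((p,q),e) \<in> Q" "T = {p,q,e}" unfolding key_def by auto
    then show "T \<in> T3" unfolding Q_def P2_def T3_def by auto
  qed
  have step2: "(\<Sum>y\<in>Q. H y) = (\<Sum>T\<in>T3. \<Sum>y\<in>{y\<in>Q. key y = T}. H y)"
    using sum.group[OF finQ finT3 keyQ, of H] by simp
  have step3: "(\<Sum>y\<in>{y\<in>Q. key y = T}. H y) = gk k (jT S T)" if T: "T \<in> T3" for T
  proof -
    have "card T = 3" "T \<subseteq> S" using T T3_def by auto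
    then obtain a b c where abc: "T = {a,b,c}" "a \<noteq> b" "b \<noteq> c" "a \<noteq> c"
      by (auto simp: card_3_iff)
    have S3: "a \<in> S" "b \<in> S" "c \<in> S" using abc \<open>T \<subseteq> S\<close> by auto
    have D: "det3 a b c \<noteq> 0" using gp_noncol[OF gp S3] abc by simp
    have Dacb: "det3 a c b \<noteq> 0" using D det3_swap23[of a b c] by simp
    have e1: "cc b a c = cc a b c" using cc_swap12[OF D] .
    have e2: "cc c a b = cc a b c" using cc_swap12[OF Dacb] cc_swap23[OF D] by simp
    have Y: "Yc s a \<noteq> Yc s b" "Yc s a \<noteq> Yc s c" "Yc s b \<noteq> Yc s c"
      using G1D[OF g1] S3 abc by auto
    have X: "Xc s (cc a b c) \<noteq> Xc s a" "Xc s (cc a b c) \<noteq> Xc s b" "Xc s (cc a b c) \<noteq> Xc s c"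
      using G2D[OF g2 S3(1,2,3)] G2D[OF g2 S3(2,1,3)] G2D[OF g2 S3(3,1,2)] abc e1 e2 by auto
    have W: "om s a b c + om s a c b + om s b a c + om s b c a + om s c a b + om s c b a = 1"
      by (rule W_one[OF D _ _ _ Y X]) (use abc in auto)
    have fib: "{y\<in>Q. key y = T} = {((a,b),c), ((a,c),b), ((b,a),c), ((b,c),a), ((c,a),b), ((c,b),a)}"
      unfolding Q_def P2_def key_def abc(1) using fiber6[OF S3 abc(2) abc(4) abc(3)] by simp
    have T': "{a,c,b} = T" "{b,a,c} = T" "{b,c,a} = T" "{c,a,b} = T" "{c,b,a} = T"
      unfolding abc(1) by auto
    have "(\<Sum>y\<in>{y\<in>Q. key y = T}. H y)
        = (om s a b c + om s a c b + om s b a c + om s b c a + om s c a b + om s c b a) * gk k (jT S T)"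
      unfolding fib H_def using abc by (simp add: T' abc(1)[symmetric] algebra_simps)
    then show ?thesis using W by simp
  qed
  have "(\<Sum>x\<in>P2. \<Sum>e\<in>S - {fst x, snd x}. om s (fst x) (snd x) e * gk k (jT S {fst x, snd x, e}))
     = (\<Sum>T\<in>T3. \<Sum>y\<in>{y\<in>Q. key y = T}. H y)" using step1 step2 by simp
  also have "\<dots> = (\<Sum>T\<in>T3. gk k (jT S T))" by (rule sum.cong[OF refl step3])
  finally show ?thesis unfolding P2_def T3_def .
qed

lemma circ_sum:
  assumes fin: "finite S"
  shows "(\<Sum>T\<in>{T. T \<subseteq> S \<and> card T = 3}. gk k (jT S T))
       = int (circ_count S (k - 1)) - int (circ_count S k)"
proof -
  define T3 where "T3 = {T. T \<subseteq> S \<and> card T = 3}"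
  have "T3 \<subseteq> Pow S" unfolding T3_def by auto
  then have finT3: "finite T3" using fin by (simp add: finite_subset)
  have cc_eq: "(\<Sum>T\<in>T3. (of_bool (int (jT S T) = j) :: int)) = int (circ_count S j)" for j
  proof (cases "j < 0")
    case True
    then have "(\<Sum>T\<in>T3. (of_bool (int (jT S T) = j) :: int)) = 0" by (intro sum.neutral) auto
    then show ?thesis using True by (simp add: circ_count_def)
  next
    case False
    have "{T\<in>T3. int (jT S T) = j} = {T. T \<subseteq> S \<and> card T = 3 \<and> int (card {p\<in>S. in_circumdisk T p}) = j}"
      unfolding T3_def jT_def by auto
    then show ?thesis using False sum_of_bool_card[OF finT3, of "\<lambda>T. int (jT S T) = j"]
      by (simp add: circ_count_def)
  qed
  show ?thesis unfolding T3_def[symmetric] gk_def sum_subtractf cc_eq ..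
qed

theorem circ_identity:
  assumes fin: "finite S" and gp: "general_position S"
  shows "2 * int (card S - Suc k) = int (NN S k) - (int (circ_count S (int k - 1)) - int (circ_count S (int k)))"
proof -
  obtain s where g1: "G1 s S" and g2: "G2 s S" using generic_exists[OF fin gp] by blast
  define P2 where "P2 = Sigma S (\<lambda>p. S - {p})"
  have finP2: "finite P2" unfolding P2_def using fin by auto
  have "(\<Sum>x\<in>P2. (of_bool (int (lev s S (fst x) (snd x)) = int k) :: int))
      = (\<Sum>p\<in>S. \<Sum>q\<in>S - {p}. (of_bool (int (lev s S p q) = int k) :: int))"
    unfolding P2_def by (subst sum.Sigma) (use fin in \<open>auto simp: case_prod_beta'\<close>)
  also have "\<dots> = 2 * int (card S - Suc k)" by (rule Zk[OF fin gp g1 g2])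
  finally have L: "(\<Sum>x\<in>P2. (of_bool (int (lev s S (fst x) (snd x)) = int k) :: int)) = 2 * int (card S - Suc k)" .
  have "(\<Sum>x\<in>P2. (of_bool (int (lev s S (fst x) (snd x)) = int k) :: int))
      = (\<Sum>x\<in>P2. of_bool (int (card (Lft S (fst x) (snd x))) = int k)
           - (\<Sum>e\<in>S - {fst x, snd x}. om s (fst x) (snd x) e * gk (int k) (jT S {fst x, snd x, e})))"
  proof (rule sum.cong[OF refl])
    fix x assume "x \<in> P2"
    then show "(of_bool (int (lev s S (fst x) (snd x)) = int k) :: int)
      = of_bool (int (card (Lft S (fst x) (snd x))) = int k)
           - (\<Sum>e\<in>S - {fst x, snd x}. om s (fst x) (snd x) e * gk (int k) (jT S {fst x, snd x, e}))"
      unfolding P2_def by (intro per_pair[OF fin gp g1 g2]) auto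
  qed
  also have "\<dots> = (\<Sum>x\<in>P2. (of_bool (int (card (Lft S (fst x) (snd x))) = int k) :: int))
      - (\<Sum>x\<in>P2. \<Sum>e\<in>S - {fst x, snd x}. om s (fst x) (snd x) e * gk (int k) (jT S {fst x, snd x, e}))"
    by (rule sum_subtractf)
  also have "(\<Sum>x\<in>P2. \<Sum>e\<in>S - {fst x, snd x}. om s (fst x) (snd x) e * gk (int k) (jT S {fst x, snd x, e}))
      = int (circ_count S (int k - 1)) - int (circ_count S (int k))"
    unfolding P2_def group_sum[OF fin gp g1 g2] circ_sum[OF fin] ..
  also have "(\<Sum>x\<in>P2. (of_bool (int (card (Lft S (fst x) (snd x))) = int k) :: int)) = int (NN S k)"
  proof -
    have "{x\<in>P2. int (card (Lft S (fst x) (snd x))) = int k}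
        = {(p,q). p\<in>S \<and> q\<in>S \<and> p \<noteq> q \<and> card (Lft S p q) = k}"
      unfolding P2_def by auto
    then show ?thesis using sum_of_bool_card[OF finP2, of "\<lambda>x. int (card (Lft S (fst x) (snd x))) = int k"]
      unfolding NN_def by simp
  qed
  finally show ?thesis using L by simp
qed

lemma vor_mem: "c \<in> voronoi_region S A \<longleftrightarrow> (\<forall>x\<in>A. \<forall>y\<in>S - A. sd x c \<le> sd y c)"
  unfolding voronoi_region_def halfplane_def by (auto simp: dist_le_sd)

lemma sd_inner: "sd a c - sd b c = inner a a - inner b b - 2 * inner c (a - b)"
  unfolding sd_def inner2 by (simp add: power2_eq_square algebra_simps)

lemma perturb:
  fixes f g :: "'a \<Rightarrow> real"
  assumes "finite P" "\<forall>x\<in>P. f x > 0 \<or> (f x = 0 \<and> g x > 0)"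
  shows "\<exists>\<epsilon>>0. \<forall>x\<in>P. f x + \<epsilon> * g x > 0"
proof -
  have "\<exists>\<epsilon>>0. \<forall>\<epsilon>'. 0 < \<epsilon>' \<and> \<epsilon>' \<le> \<epsilon> \<longrightarrow> (\<forall>x\<in>P. f x + \<epsilon>' * g x > 0)"
    using assms
  proof (induction P rule: finite_induct)
    case empty
    then show ?case by (intro exI[of _ 1]) auto
  next
    case (insert x P)
    then obtain \<epsilon>1 where e1: "\<epsilon>1 > 0" "\<forall>\<epsilon>'. 0 < \<epsilon>' \<and> \<epsilon>' \<le> \<epsilon>1 \<longrightarrow> (\<forall>y\<in>P. f y + \<epsilon>' * g y > 0)"
      by auto
    have hx: "f x > 0 \<or> (f x = 0 \<and> g x > 0)" using insert.prems by auto
    define \<epsilon>x where "\<epsilon>x = (if f x > 0 \<and> g x < 0 then f x / (- 2 * g x) else 1)"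
    have ex: "\<epsilon>x > 0" unfolding \<epsilon>x_def using hx by (auto simp: divide_pos_neg)
    have hx2: "f x + \<epsilon>' * g x > 0" if "0 < \<epsilon>'" "\<epsilon>' \<le> \<epsilon>x" for \<epsilon>'
    proof (cases "f x > 0 \<and> g x < 0")
      case True
      then have "\<epsilon>' * (- g x) \<le> \<epsilon>x * (- g x)" using that by (intro mult_right_mono) auto
      also have "\<epsilon>x * (- g x) = f x / 2" unfolding \<epsilon>x_def using True by (simp add: field_simps)
      finally show ?thesis using True by simp
    next
      case False
      then show ?thesis using hx that by (auto intro: add_pos_nonneg add_nonneg_pos simp: mult_nonneg_nonneg)
    qed
    show ?case
      by (rule exI[of _ "min \<epsilon>1 \<epsilon>x"]) (use e1 ex hx2 in auto)
  qed
  then show ?thesis by (metis order_refl)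
qed

lemma strict_imp_unbounded:
  assumes fin: "finite S" and AS: "A \<subseteq> S" and a0: "a0 \<in> A" and b0: "b0 \<in> S - A"
    and u: "\<forall>a\<in>A. \<forall>b\<in>S - A. inner u (a - b) > 0"
  shows "voronoi_region S A \<noteq> {} \<and> \<not> bounded (voronoi_region S A)"
proof -
  define PP where "PP = A \<times> (S - A)"
  have finPP: "finite PP" unfolding PP_def using fin AS by (simp add: finite_subset)
  define F where "F = (\<lambda>(a,b). \<bar>(inner a a - inner b b) / (2 * inner u (a - b))\<bar>)"
  define T where "T = (\<Sum>x\<in>PP. F x)"
  have FT: "F (x,y) \<le> T" if "x \<in> A" "y \<in> S - A" for x y
    unfolding T_def by (rule member_le_sum) (use that finPP in \<open>auto simp: PP_def F_def\<close>)
  have mem: "t *\<^sub>R u \<in> voronoi_region S A" if t: "t \<ge> T" for t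
    unfolding vor_mem
  proof (intro ballI)
    fix x y assume xy: "x \<in> A" "y \<in> S - A"
    have pos: "inner u (x - y) > 0" using u xy by auto
    have "(inner x x - inner y y) / (2 * inner u (x - y)) \<le> \<bar>(inner x x - inner y y) / (2 * inner u (x - y))\<bar>"
      by (rule abs_ge_self)
    also have "\<dots> \<le> t" using FT[OF xy] t unfolding F_def by simp
    finally have "(inner x x - inner y y) / (2 * inner u (x - y)) \<le> t" .
    then have "inner x x - inner y y \<le> t * (2 * inner u (x - y))"
      using pos by (simp add: pos_divide_le_eq)
    then have "sd x (t *\<^sub>R u) - sd y (t *\<^sub>R u) \<le> 0"
      unfolding sd_inner by (simp add: algebra_simps)
    then show "sd x (t *\<^sub>R u) \<le> sd y (t *\<^sub>R u)" by simp
  qed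
  have "T *\<^sub>R u \<in> voronoi_region S A" using mem by simp
  then have ne: "voronoi_region S A \<noteq> {}" by auto
  have un: "norm u > 0" using u a0 b0 by (metis inner_zero_left less_irrefl zero_less_norm_iff)
  have nb: "\<not> bounded (voronoi_region S A)"
  proof
    assume "bounded (voronoi_region S A)"
    then obtain B where B: "\<forall>x\<in>voronoi_region S A. norm x \<le> B" unfolding bounded_iff by auto
    define t where "t = max T ((\<bar>B\<bar> + 1) / norm u)"
    have "t *\<^sub>R u \<in> voronoi_region S A" using mem[of t] t_def by simp
    then have "norm (t *\<^sub>R u) \<le> B" using B by blast
    moreover have "norm (t *\<^sub>R u) \<ge> \<bar>B\<bar> + 1"
    proof -
      have "t \<ge> (\<bar>B\<bar> + 1) / norm u" unfolding t_def by simp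
      then have "t * norm u \<ge> \<bar>B\<bar> + 1" using un by (simp add: pos_divide_le_eq)
      moreover have "t \<ge> 0" using \<open>t \<ge> (\<bar>B\<bar> + 1) / norm u\<close> un
        by (smt (verit) divide_pos_pos)
      ultimately show ?thesis by simp
    qed
    ultimately show False by simp
  qed
  show ?thesis using ne nb by simp
qed

lemma unbounded_weak:
  assumes fin: "finite S" and AS: "A \<subseteq> S" and An: "A \<noteq> {}" and Bn: "S - A \<noteq> {}"
    and nb: "\<not> bounded (voronoi_region S A)"
  shows "\<exists>u. u \<noteq> 0 \<and> (\<forall>a\<in>A. \<forall>b\<in>S - A. inner u (a - b) \<ge> 0)"
proof (rule ccontr)
  assume H0: "\<not> ?thesis"
  have H: "\<exists>x\<in>A \<times> (S - A). inner u (snd x - fst x) > 0" if "u \<noteq> 0" for u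
  proof -
    have "\<not> (\<forall>a\<in>A. \<forall>b\<in>S - A. inner u (a - b) \<ge> 0)" using H0 that by auto
    then obtain a b where "a \<in> A" "b \<in> S - A" "\<not> inner u (a - b) \<ge> 0" by auto
    then show ?thesis by (intro bexI[of _ "(a,b)"]) (auto simp: inner_diff_right)
  qed
  define PP where "PP = A \<times> (S - A)"
  have finPP: "finite PP" unfolding PP_def using fin AS by (simp add: finite_subset)
  have PPne: "PP \<noteq> {}" unfolding PP_def using An Bn by auto
  define N where "N = real (card PP)"
  have Npos: "N > 0" unfolding N_def using finPP PPne by (simp add: card_gt_0_iff)
  define h where "h u = (\<Sum>x\<in>PP. max 0 (inner u (snd x - fst x)))" for u :: point
  have cont: "continuous_on (sphere 0 1) h" unfolding h_def by (intro continuous_intros)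
  have sne: "sphere (0::point) 1 \<noteq> {}" by simp
  from continuous_attains_inf[OF compact_sphere sne cont]
  obtain u0 where u0: "u0 \<in> sphere 0 1" "\<forall>y\<in>sphere 0 1. h u0 \<le> h y" by (elim bexE)
  define \<delta> where "\<delta> = h u0"
  have "u0 \<noteq> 0" using u0(1) by auto
  then obtain x0 where x0: "x0 \<in> PP" "inner u0 (snd x0 - fst x0) > 0" using H unfolding PP_def by blast
  have dpos: "\<delta> > 0" unfolding \<delta>_def h_def
    by (rule sum_pos2[OF finPP x0(1)]) (use x0 in auto)
  define M where "M = (\<Sum>x\<in>PP. \<bar>inner (snd x) (snd x) - inner (fst x) (fst x)\<bar>)"
  have bnd: "norm c \<le> M * N / (2 * \<delta>)" if c: "c \<in> voronoi_region S A" for c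
  proof (cases "c = 0")
    case True
    have "M \<ge> 0" unfolding M_def by (simp add: sum_nonneg)
    then show ?thesis using True Npos dpos by simp
  next
    case False
    define u where "u = (1 / norm c) *\<^sub>R c"
    have un: "u \<in> sphere 0 1" unfolding u_def using False by simp
    have hu: "h u \<ge> \<delta>" using u0(2) un \<delta>_def by simp
    have "\<exists>x\<in>PP. max 0 (inner u (snd x - fst x)) \<ge> \<delta> / N"
    proof (rule ccontr)
      assume "\<not> ?thesis"
      then have all: "max 0 (inner u (snd x - fst x)) < \<delta> / N" if "x \<in> PP" for x
        using that by auto
      have "h u < (\<Sum>x\<in>PP. \<delta> / N)" unfolding h_def
        by (rule sum_strict_mono[OF finPP PPne all])
      also have "\<dots> = \<delta>" unfolding N_def using Npos N_def by simp
      finally show False using hu by simp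
    qed
    then obtain x where x: "x \<in> PP" "max 0 (inner u (snd x - fst x)) \<ge> \<delta> / N" by blast
    have dN: "\<delta> / N > 0" using dpos Npos by simp
    then have xu: "inner u (snd x - fst x) \<ge> \<delta> / N" using x(2) by linarith
    have "fst x \<in> A" "snd x \<in> S - A" using x(1) PP_def by auto
    then have "sd (fst x) c \<le> sd (snd x) c" using c unfolding vor_mem by blast
    then have "2 * inner c (snd x - fst x) \<le> inner (snd x) (snd x) - inner (fst x) (fst x)"
      using sd_inner[of "fst x" c "snd x"] by (simp add: inner_diff_right)
    also have "\<dots> \<le> M" unfolding M_def
      by (rule order_trans[OF abs_ge_self member_le_sum[OF x(1)]]) (use finPP in auto)
    finally have M1: "2 * inner c (snd x - fst x) \<le> M" .
    have "inner c (snd x - fst x) = norm c * inner u (snd x - fst x)"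
      unfolding u_def using False by simp
    also have "\<dots> \<ge> norm c * (\<delta> / N)" by (rule mult_left_mono[OF xu norm_ge_zero])
    finally have "2 * (norm c * (\<delta> / N)) \<le> M" using M1 by linarith
    then have "norm c * (2 * \<delta>) \<le> M * N" using Npos by (simp add: field_simps)
    then show ?thesis using dpos by (simp add: pos_le_divide_eq)
  qed
  have "bounded (voronoi_region S A)" unfolding bounded_iff
    by (intro exI[of _ "M * N / (2 * \<delta>)"] ballI bnd)
  then show False using nb by simp
qed

lemma level_collinear:
  assumes u: "(u::point) \<noteq> 0" and e1: "inner u x = inner u y" and e2: "inner u x = inner u z"
  shows "det3 x y z = 0"
proof -
  define a where "a = y$1 - x$1"
  define b where "b = y$2 - x$2"
  define c where "c = z$1 - x$1"
  define d where "d = z$2 - x$2"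
  have f1: "u$1 * a + u$2 * b = 0" using e1 unfolding inner2 a_def b_def by (simp add: algebra_simps)
  have f2: "u$1 * c + u$2 * d = 0" using e2 unfolding inner2 c_def d_def by (simp add: algebra_simps)
  have dd: "det3 x y z = a * d - b * c" unfolding det3_def a_def b_def c_def d_def by simp
  have g1: "u$1 * (a * d - b * c) = d * (u$1 * a + u$2 * b) - b * (u$1 * c + u$2 * d)"
    by (simp add: algebra_simps)
  have g2: "u$2 * (a * d - b * c) = a * (u$1 * c + u$2 * d) - c * (u$1 * a + u$2 * b)"
    by (simp add: algebra_simps)
  have "u$1 * (a * d - b * c) = 0" "u$2 * (a * d - b * c) = 0" unfolding g1 g2 f1 f2 by simp_all
  moreover have "u$1 \<noteq> 0 \<or> u$2 \<noteq> 0" using u point_eqI[of u 0] by auto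
  ultimately show ?thesis unfolding dd by auto
qed

lemma weak_to_strict:
  assumes fin: "finite S" and gp: "general_position S" and AS: "A \<subseteq> S"
    and u: "u \<noteq> 0" and weak: "\<forall>a\<in>A. \<forall>b\<in>S - A. inner u (a - b) \<ge> 0"
  shows "\<exists>v. \<forall>a\<in>A. \<forall>b\<in>S - A. inner v (a - b) > 0"
proof (cases "\<exists>a\<in>A. \<exists>b\<in>S - A. inner u (a - b) = 0")
  case False
  then show ?thesis using weak by (intro exI[of _ u]) (auto simp: order_le_less)
next
  case True
  then obtain a0 b0 where ab0: "a0 \<in> A" "b0 \<in> S - A" "inner u (a0 - b0) = 0" by blast
  define w :: point where "w = vector [- u$2, u$1]"
  have w12: "w$1 = - u$2" "w$2 = u$1" unfolding w_def by simp_all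
  have wne: "inner w (a0 - b0) \<noteq> 0"
  proof
    assume h: "inner w (a0 - b0) = 0"
    define z1 where "z1 = a0$1 - b0$1"
    define z2 where "z2 = a0$2 - b0$2"
    have h1: "u$1 * z1 + u$2 * z2 = 0" using ab0(3) unfolding inner2 z1_def z2_def by simp
    have h2: "- u$2 * z1 + u$1 * z2 = 0" using h unfolding inner2 w12 z1_def z2_def by simp
    have "(u$1^2 + u$2^2) * z1 = u$1 * (u$1 * z1 + u$2 * z2) - u$2 * (- u$2 * z1 + u$1 * z2)"
      by (simp add: power2_eq_square algebra_simps)
    then have k1: "(u$1^2 + u$2^2) * z1 = 0" unfolding h1 h2 by simp
    have "(u$1^2 + u$2^2) * z2 = u$2 * (u$1 * z1 + u$2 * z2) + u$1 * (- u$2 * z1 + u$1 * z2)"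
      by (simp add: power2_eq_square algebra_simps)
    then have k2: "(u$1^2 + u$2^2) * z2 = 0" unfolding h1 h2 by simp
    have "u$1 \<noteq> 0 \<or> u$2 \<noteq> 0" using u point_eqI[of u 0] by auto
    then have "u$1^2 + u$2^2 \<noteq> 0" by (simp add: add_nonneg_eq_0_iff)
    then have "z1 = 0" "z2 = 0" using k1 k2 by auto
    then have "a0 = b0" using point_eqI[of a0 b0] unfolding z1_def z2_def by simp
    then show False using ab0 by auto
  qed
  define v where "v = (if inner w (a0 - b0) > 0 then w else - w)"
  have vpos: "inner v (a0 - b0) > 0" unfolding v_def using wne by auto
  have uniq: "a = a0 \<and> b = b0" if ab: "a \<in> A" "b \<in> S - A" "inner u (a - b) = 0" for a b
  proof -
    have l1: "inner u a = inner u b" "inner u a0 = inner u b0"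
      using ab(3) ab0(3) by (simp_all add: inner_diff_right)
    have "inner u a \<ge> inner u b0" "inner u a0 \<ge> inner u b"
      using weak ab ab0 by (auto simp: inner_diff_right)
    then have lv: "inner u a = inner u a0" "inner u a = inner u b0" "inner u a = inner u b"
      using l1 by linarith+
    have S4: "a \<in> S" "b \<in> S" "a0 \<in> S" "b0 \<in> S" using ab ab0 AS by auto
    have "a = a0"
    proof (rule ccontr)
      assume "a \<noteq> a0"
      moreover have "a \<noteq> b0" "a0 \<noteq> b0" using ab ab0 by auto
      ultimately have "det3 a a0 b0 \<noteq> 0" using gp_noncol[OF gp S4(1) S4(3) S4(4)] by simp
      then show False using level_collinear[OF u lv(1) lv(2)] by simp
    qed
    moreover have "b = b0"
    proof (rule ccontr)
      assume "b \<noteq> b0"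
      moreover have "a \<noteq> b" "a \<noteq> b0" using ab ab0 by auto
      ultimately have "det3 a b b0 \<noteq> 0" using gp_noncol[OF gp S4(1) S4(2) S4(4)] by simp
      then show False using level_collinear[OF u lv(3) lv(2)] by simp
    qed
    ultimately show ?thesis by simp
  qed
  define P where "P = A \<times> (S - A)"
  have finP: "finite P" unfolding P_def using fin AS by (simp add: finite_subset)
  have "\<forall>x\<in>P. inner u (fst x - snd x) > 0 \<or> (inner u (fst x - snd x) = 0 \<and> inner v (fst x - snd x) > 0)"
  proof
    fix x assume "x \<in> P"
    then have x: "fst x \<in> A" "snd x \<in> S - A" unfolding P_def by auto
    show "inner u (fst x - snd x) > 0 \<or> (inner u (fst x - snd x) = 0 \<and> inner v (fst x - snd x) > 0)"
    proof (cases "inner u (fst x - snd x) = 0")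
      case True
      then have "fst x = a0" "snd x = b0" using uniq[OF x] by auto
      then show ?thesis using True vpos by simp
    next
      case False
      then show ?thesis using weak x by force
    qed
  qed
  from perturb[OF finP this] obtain \<epsilon> where
    e: "\<forall>x\<in>P. inner u (fst x - snd x) + \<epsilon> * inner v (fst x - snd x) > 0" by blast
  show ?thesis
  proof (intro exI[of _ "u + \<epsilon> *\<^sub>R v"] ballI)
    fix a b assume "a \<in> A" "b \<in> S - A"
    then have "(a,b) \<in> P" unfolding P_def by simp
    then show "inner (u + \<epsilon> *\<^sub>R v) (a - b) > 0" using e by (auto simp: inner_add_left)
  qed
qed

lemma strict_to_pair:
  assumes fin: "finite S" and gp: "general_position S" and AS: "A \<subseteq> S"
    and a0: "a0 \<in> A" and b0: "b0 \<in> S - A"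
    and u: "\<forall>a\<in>A. \<forall>b\<in>S - A. inner u (a - b) > 0"
  shows "\<exists>p\<in>A. \<exists>q\<in>S - A. Lft S p q = A - {p}"
proof -
  define w :: point where "w = vector [- u$2, u$1]"
  have w12: "w$1 = - u$2" "w$2 = u$1" unfolding w_def by simp_all
  define PP where "PP = A \<times> (S - A)"
  have finPP: "finite PP" unfolding PP_def using fin AS by (simp add: finite_subset)
  have PPne: "PP \<noteq> {}" unfolding PP_def using a0 b0 by auto
  define G where "G x = inner w (fst x - snd x) / inner u (fst x - snd x)" for x
  have "Max (G ` PP) \<in> G ` PP" using finPP PPne by simp
  then obtain x0 where x0: "x0 \<in> PP" "G x0 = Max (G ` PP)" by auto
  have Gmax: "G x \<le> G x0" if "x \<in> PP" for x using that x0 finPP by simp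
  define p where "p = fst x0"
  define q where "q = snd x0"
  have pq: "p \<in> A" "q \<in> S - A" using x0 unfolding PP_def p_def q_def by auto
  have Sp: "p \<in> S" "q \<in> S" using pq AS by auto
  have upos: "u$1^2 + u$2^2 > 0"
  proof -
    have "u \<noteq> 0" using u a0 b0 by fastforce
    then have "u$1 \<noteq> 0 \<or> u$2 \<noteq> 0" using point_eqI[of u 0] by auto
    then show ?thesis by (simp add: add_pos_nonneg add_nonneg_pos sum_power2_gt_zero_iff)
  qed
  have left: "det3 p q x > 0" if x: "x \<in> A" "x \<noteq> p" for x
  proof -
    have xq: "(x,q) \<in> PP" using x pq PP_def by auto
    have d1: "inner u (x - q) > 0" "inner u (p - q) > 0" using u x pq by auto
    have "G (x,q) \<le> G (p,q)" using Gmax[OF xq] unfolding p_def q_def by simp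
    then have "inner w (x - q) / inner u (x - q) \<le> inner w (p - q) / inner u (p - q)"
      unfolding G_def by simp
    then have ineq: "inner w (x - q) * inner u (p - q) \<le> inner w (p - q) * inner u (x - q)"
      using d1 by (simp add: divide_le_eq le_divide_eq field_simps)
    have id: "det3 p q x * (u$1^2 + u$2^2) = inner w (p - q) * inner u (x - q) - inner w (x - q) * inner u (p - q)"
      unfolding det3_def inner2 w12 by (simp add: power2_eq_square algebra_simps)
    have "det3 p q x * (u$1^2 + u$2^2) \<ge> 0" using id ineq by simp
    then have "det3 p q x \<ge> 0" using upos by (simp add: zero_le_mult_iff)
    moreover have "det3 p q x \<noteq> 0"
      using gp_noncol[OF gp Sp(1) Sp(2), of x] x AS pq by auto
    ultimately show ?thesis by simp
  qed
  have right: "det3 p q y < 0" if y: "y \<in> S - A" "y \<noteq> q" for y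
  proof -
    have py: "(p,y) \<in> PP" using y pq PP_def by auto
    have d1: "inner u (p - y) > 0" "inner u (p - q) > 0" using u y pq by auto
    have "G (p,y) \<le> G (p,q)" using Gmax[OF py] unfolding p_def q_def by simp
    then have "inner w (p - y) / inner u (p - y) \<le> inner w (p - q) / inner u (p - q)"
      unfolding G_def by simp
    then have ineq: "inner w (p - y) * inner u (p - q) \<le> inner w (p - q) * inner u (p - y)"
      using d1 by (simp add: divide_le_eq le_divide_eq field_simps)
    have id: "det3 p q y * (u$1^2 + u$2^2) = inner u (p - q) * inner w (p - y) - inner w (p - q) * inner u (p - y)"
      unfolding det3_def inner2 w12 by (simp add: power2_eq_square algebra_simps)
    have "det3 p q y * (u$1^2 + u$2^2) \<le> 0" using id ineq by (simp add: mult.commute)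
    then have "det3 p q y \<le> 0" using upos by (simp add: mult_le_0_iff)
    moreover have "det3 p q y \<noteq> 0"
      using gp_noncol[OF gp Sp(1) Sp(2), of y] y pq by auto
    ultimately show ?thesis by simp
  qed
  have "Lft S p q = A - {p}"
  proof (rule set_eqI)
    fix x
    show "x \<in> Lft S p q \<longleftrightarrow> x \<in> A - {p}"
    proof (cases "x \<in> A")
      case True
      then show ?thesis using left[of x] AS unfolding Lft_def by (auto simp: det3_def)
    next
      case False
      then show ?thesis using right[of x] unfolding Lft_def by (cases "x = q") (auto simp: det3_def)
    qed
  qed
  then show ?thesis using pq by blast
qed

lemma pair_to_strict:
  assumes fin: "finite S" and gp: "general_position S" and pq: "p \<in> S" "q \<in> S" "p \<noteq> q"
  defines "A \<equiv> insert p (Lft S p q)"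
  shows "\<exists>u. \<forall>a\<in>A. \<forall>b\<in>S - A. inner u (a - b) > 0"
proof -
  define n :: point where "n = vector [- (q$2 - p$2), q$1 - p$1]"
  define d where "d = q - p"
  have nid: "inner n (a - b) = det3 p q a - det3 p q b" for a b
    unfolding n_def inner2 det3_def by (simp add: algebra_simps)
  have AS: "A \<subseteq> S" unfolding A_def Lft_def using pq by auto
  define P where "P = A \<times> (S - A)"
  have finP: "finite P" unfolding P_def using fin AS by (simp add: finite_subset)
  have detA: "det3 p q a > 0 \<or> a = p" if "a \<in> A" for a using that unfolding A_def Lft_def by auto
  have detB: "det3 p q b < 0 \<or> b = q" if "b \<in> S - A" for b
  proof -
    have b: "b \<in> S" "b \<noteq> p" "\<not> det3 p q b > 0" using that unfolding A_def Lft_def by auto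
    show ?thesis
    proof (cases "b = q")
      case False
      then have "det3 p q b \<noteq> 0" using gp_noncol[OF gp pq(1,2) b(1)] pq b by auto
      then show ?thesis using b by simp
    qed simp
  qed
  have qA: "q \<notin> A" unfolding A_def Lft_def using pq by (auto simp: det3_def)
  have "\<forall>x\<in>P. inner n (fst x - snd x) > 0 \<or> (inner n (fst x - snd x) = 0 \<and> - inner d (fst x - snd x) > 0)"
  proof
    fix x assume "x \<in> P"
    then have x: "fst x \<in> A" "snd x \<in> S - A" unfolding P_def by auto
    have z: "det3 p q p = 0" "det3 p q q = 0" by (simp_all add: det3_def)
    show "inner n (fst x - snd x) > 0 \<or> (inner n (fst x - snd x) = 0 \<and> - inner d (fst x - snd x) > 0)"
    proof (cases "fst x = p \<and> snd x = q")
      case True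
      have "- inner d (p - q) = inner d d" unfolding d_def by (simp add: inner_commute inner_diff_right inner_diff_left)
      moreover have "inner d d > 0" unfolding d_def using pq by simp
      ultimately show ?thesis using True z unfolding nid by simp
    next
      case False
      then show ?thesis using detA[OF x(1)] detB[OF x(2)] z unfolding nid by auto
    qed
  qed
  from perturb[OF finP this] obtain \<epsilon> where
    e: "\<forall>x\<in>P. inner n (fst x - snd x) + \<epsilon> * (- inner d (fst x - snd x)) > 0" by blast
  show ?thesis
  proof (intro exI[of _ "n - \<epsilon> *\<^sub>R d"] ballI)
    fix a b assume "a \<in> A" "b \<in> S - A"
    then have "(a,b) \<in> P" unfolding P_def by simp
    then show "inner (n - \<epsilon> *\<^sub>R d) (a - b) > 0" using e by (auto simp: inner_diff_left)
  qed
qed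

lemma dom_props:
  assumes gp: "general_position S" and pq: "p \<in> S" "q \<in> S" "p \<noteq> q"
  shows "q \<notin> insert p (Lft S p q)"
    "\<And>x. x \<in> insert p (Lft S p q) - {p} \<Longrightarrow> det3 p q x > 0"
    "\<And>x. x \<in> S - insert p (Lft S p q) - {q} \<Longrightarrow> det3 p q x < 0"
proof -
  show "q \<notin> insert p (Lft S p q)" unfolding Lft_def using pq by (auto simp: det3_def)
  show "det3 p q x > 0" if "x \<in> insert p (Lft S p q) - {p}" for x using that unfolding Lft_def by auto
  show "det3 p q x < 0" if x: "x \<in> S - insert p (Lft S p q) - {q}" for x
  proof -
    have "x \<in> S" "x \<noteq> p" "x \<noteq> q" "\<not> det3 p q x > 0" using x unfolding Lft_def by auto
    moreover then have "det3 p q x \<noteq> 0" using gp_noncol[OF gp pq(1,2)] pq by auto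
    ultimately show ?thesis by simp
  qed
qed

lemma phi_inj:
  assumes gp: "general_position S" and pq: "p \<in> S" "q \<in> S" "p \<noteq> q"
    and pq': "p' \<in> S" "q' \<in> S" "p' \<noteq> q'"
    and eq: "insert p (Lft S p q) = insert p' (Lft S p' q')"
  shows "p = p' \<and> q = q'"
proof -
  define A where "A = insert p (Lft S p q)"
  have A': "A = insert p' (Lft S p' q')" using eq A_def by simp
  note P1 = dom_props[OF gp pq, folded A_def]
  note P2 = dom_props[OF gp pq', folded A'] 
  have pA: "p \<in> A" "p' \<in> A" using A_def A' by auto
  have sw1: "det3 p q' q = - det3 p q q'" by (simp add: det3_def algebra_simps)
  have sw2: "det3 p' q p = - det3 p q p'" by (simp add: det3_def algebra_simps)
  have id4: "(det3 p q p' - det3 p q q') = - (det3 p' q' p - det3 p' q' q)" by (simp add: det3_def algebra_simps)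
  show ?thesis
  proof (cases "p = p'")
    case True
    show ?thesis
    proof (rule ccontr)
      assume "\<not> ?thesis"
      then have "q \<noteq> q'" using True by simp
      then have "det3 p q q' < 0" "det3 p q' q < 0" using P1(3)[of q'] P2(3)[of q] P1(1) P2(1) pq pq' True by auto
      then show False using sw1 by simp
    qed
  next
    case False
    have a: "det3 p q p' > 0" using P1(2)[of p'] pA False by auto
    have b: "det3 p' q' p > 0" using P2(2)[of p] pA False by auto
    show ?thesis
    proof (cases "q = q'")
      case True
      then have "det3 p' q p > 0" using b by simp
      then show ?thesis using a sw2 by simp
    next
      case False
      have c: "det3 p q q' < 0" using P1(3)[of q'] P2(1) pq' False by auto
      have d: "det3 p' q' q < 0" using P2(3)[of q] P1(1) pq False by auto
      show ?thesis using a b c d id4 by simp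
    qed
  qed
qed

theorem f_inf_NN:
  assumes fin: "finite S" and gp: "general_position S" and i1: "1 \<le> i" and iS: "i < card S"
  shows "f_inf S i = NN S (i - 1)"
proof -
  define Dom where "Dom = {(p,q). p\<in>S \<and> q\<in>S \<and> p \<noteq> q \<and> card (Lft S p q) = i - 1}"
  define Tg where "Tg = {A. A \<subseteq> S \<and> card A = i \<and> voronoi_region S A \<noteq> {} \<and> \<not> bounded (voronoi_region S A)}"
  define phi where "phi = (\<lambda>(p,q). insert p (Lft S p q))"
  have inj: "inj_on phi Dom"
  proof (rule inj_onI)
    fix x y assume xy: "x \<in> Dom" "y \<in> Dom" "phi x = phi y"
    obtain p q where x: "x = (p,q)" by (cases x)
    obtain p' q' where y: "y = (p',q')" by (cases y)
    have h1: "p \<in> S" "q \<in> S" "p \<noteq> q" using xy(1) unfolding x Dom_def by auto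
    have h2: "p' \<in> S" "q' \<in> S" "p' \<noteq> q'" using xy(2) unfolding y Dom_def by auto
    have "insert p (Lft S p q) = insert p' (Lft S p' q')" using xy(3) unfolding x y phi_def by simp
    then have "p = p' \<and> q = q'" by (rule phi_inj[OF gp h1 h2])
    then show "x = y" unfolding x y by simp
  qed
  have img1: "phi ` Dom \<subseteq> Tg"
  proof
    fix A assume "A \<in> phi ` Dom"
    then obtain x where x: "x \<in> Dom" "A = phi x" by auto
    obtain p q where xpq: "x = (p,q)" by (cases x)
    have pq: "p \<in> S" "q \<in> S" "p \<noteq> q" "card (Lft S p q) = i - 1" using x(1) unfolding xpq Dom_def by auto
    have A: "A = insert p (Lft S p q)" using x(2) unfolding xpq phi_def by simp
    have AS: "A \<subseteq> S" unfolding A Lft_def using pq by auto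
    have "p \<notin> Lft S p q" unfolding Lft_def by (simp add: det3_def)
    moreover have "finite (Lft S p q)" unfolding Lft_def using fin by simp
    ultimately have cA: "card A = i" unfolding A using pq(4) i1 by simp
    obtain u where u: "\<forall>a\<in>A. \<forall>b\<in>S - A. inner u (a - b) > 0"
      using pair_to_strict[OF fin gp pq(1-3)] unfolding A[symmetric] by blast
    have qA: "q \<in> S - A" using dom_props(1)[OF gp pq(1-3)] pq(2) unfolding A[symmetric] by simp
    have pA: "p \<in> A" unfolding A by simp
    have "voronoi_region S A \<noteq> {} \<and> \<not> bounded (voronoi_region S A)"
      by (rule strict_imp_unbounded[OF fin AS pA qA u])
    then show "A \<in> Tg" unfolding Tg_def using AS cA by auto
  qed
  have img2: "Tg \<subseteq> phi ` Dom"
  proof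
    fix A assume "A \<in> Tg"
    then have AS: "A \<subseteq> S" and cA: "card A = i" and ne: "voronoi_region S A \<noteq> {}"
      and nb: "\<not> bounded (voronoi_region S A)" unfolding Tg_def by auto
    have An: "A \<noteq> {}" using cA i1 by auto
    have Bn: "S - A \<noteq> {}"
    proof
      assume "S - A = {}"
      then have "A = S" using AS by auto
      then show False using cA iS by simp
    qed
    obtain a0 where a0: "a0 \<in> A" using An by auto
    obtain b0 where b0: "b0 \<in> S - A" using Bn by auto
    obtain u where u: "u \<noteq> 0" "\<forall>a\<in>A. \<forall>b\<in>S - A. inner u (a - b) \<ge> 0"
      using unbounded_weak[OF fin AS An Bn nb] by blast
    obtain v where v: "\<forall>a\<in>A. \<forall>b\<in>S - A. inner v (a - b) > 0"
      using weak_to_strict[OF fin gp AS u] by blast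
    obtain p q where pq: "p \<in> A" "q \<in> S - A" "Lft S p q = A - {p}"
      using strict_to_pair[OF fin gp AS a0 b0 v] by blast
    have "finite A" using fin AS by (simp add: finite_subset)
    then have "card (Lft S p q) = i - 1" using pq cA by simp
    moreover have "p \<in> S" "q \<in> S" "p \<noteq> q" using pq AS by auto
    ultimately have inD: "(p,q) \<in> Dom" unfolding Dom_def by simp
    have "A = phi (p,q)" unfolding phi_def using pq by auto
    from image_eqI[of A phi "(p,q)" Dom, OF this inD] show "A \<in> phi ` Dom" .
  qed
  have "bij_betw phi Dom Tg" unfolding bij_betw_def using inj img1 img2 by blast
  then have "card Dom = card Tg" by (rule bij_betw_same_card)
  then show ?thesis unfolding f_inf_def NN_def Dom_def Tg_def by simp
qed

theorem mainTheorem7: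
  fixes S :: "point set" and i :: nat
  assumes "finite S" and "card S \<ge> 3" and "general_position S"
    and "1 \<le> i" and "i \<le> card S - 2"
  shows "int (f_inf S i) + (int (circ_count S (int i - 1)) - int (circ_count S (int i - 2)))
           = 2 * (int (card S) - int i)"
proof -
  have iS: "i < card S" using assms(2,5) by linarith
  have f: "f_inf S i = NN S (i - 1)" by (rule f_inf_NN[OF assms(1,3,4) iS])
  have c: "2 * int (card S - Suc (i - 1)) = int (NN S (i - 1))
      - (int (circ_count S (int (i - 1) - 1)) - int (circ_count S (int (i - 1))))"
    by (rule circ_identity[OF assms(1,3)])
  have e1: "int (i - 1) = int i - 1" using assms(4) by simp
  have e2: "int (card S - Suc (i - 1)) = int (card S) - int i" using assms(4) iS by simp
  show ?thesis using c unfolding f e1 e2 by (simp add: algebra_simps)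
qed

end
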